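(* Let $S$ be a finite inverse monoid with underlying groupoid $G$, and let $\beta\colon S\to\mathsf{K}(G)$ be the map $\beta(a)=a^{\downarrow}=\{x\in S: x\le a\}$. Let $\alpha\colon S\to T$ be any monoid homomorphism to a Boolean inverse monoid $T$. Then there is a unique morphism of Boolean inverse monoids $\gamma\colon \mathsf{K}(G)\to T$ such that $\gamma\beta=\alpha$.
   Context: An inverse semigroup is a semigroup in which each $s$ has a unique $s^{-1}$ with $s=ss^{-1}s$, $s^{-1}=s^{-1}ss^{-1}$; natural partial order $s\le t$ iff $s=ts^{-1}s$. The underlying groupoid $G$ of $S$ is $S$ with the restricted product $s\cdot t=st$, defined exactly when $s^{-1}s=tt^{-1}$; its identities are the idempotents of $S$, with $\mathbf{d}(s)=s^{-1}s$, $\mathbf{r}(s)=ss^{-1}$. For a groupoid $G$, a local bisection is a subset $A$ with $AA^{-1}$ and $A^{-1}A$ consisting only of identities, where $AB=\{ab:a\in A,b\in B,\mathbf{d}(a)=\mathbf{r}(b)\}$; $\mathsf{K}(G)$ is the inverse monoid of local bisections under this multiplication (it is a Boolean inverse monoid, and $a^{\downarrow}$ is a local bisection). Elements $a,b$ are compatible if $a^{-1}b,ab^{-1}$ are idempotents. A Boolean inverse monoid is an inverse monoid with zero in which finite compatible subsets have joins with respect to $\le$, multiplication distributes over them, and the idempotents form a Boolean algebra. A morphism of Boolean inverse monoids is a monoid homomorphism preserving zero and binary (compatible) joins. *)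

theory Defs
  imports "HOL-Library.FuncSet"
begin

definition inverse_monoid :: "'a set \<Rightarrow> ('a \<Rightarrow> 'a \<Rightarrow> 'a) \<Rightarrow> 'a \<Rightarrow> bool" where
  "inverse_monoid M m u \<longleftrightarrow>
     u \<in> M \<and> (\<forall>x\<in>M. \<forall>y\<in>M. m x y \<in> M)
   \<and> (\<forall>x\<in>M. \<forall>y\<in>M. \<forall>z\<in>M. m (m x y) z = m x (m y z))
   \<and> (\<forall>x\<in>M. m u x = x \<and> m x u = x)
   \<and> (\<forall>x\<in>M. \<exists>!y. y \<in> M \<and> x = m (m x y) x \<and> y = m (m y x) y)"

definition monoid_hom :: "'a set \<Rightarrow> ('a \<Rightarrow> 'a \<Rightarrow> 'a) \<Rightarrow> 'a \<Rightarrow>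
    'b set \<Rightarrow> ('b \<Rightarrow> 'b \<Rightarrow> 'b) \<Rightarrow> 'b \<Rightarrow> ('a \<Rightarrow> 'b) \<Rightarrow> bool" where
  "monoid_hom M m u N n v f \<longleftrightarrow>
     f \<in> M \<rightarrow> N \<and> (\<forall>x\<in>M. \<forall>y\<in>M. f (m x y) = n (f x) (f y)) \<and> f u = v"

definition invm :: "'a set \<Rightarrow> ('a \<Rightarrow> 'a \<Rightarrow> 'a) \<Rightarrow> 'a \<Rightarrow> 'a" where
  "invm M m x = (THE y. y \<in> M \<and> x = m (m x y) x \<and> y = m (m y x) y)"

definition nleq :: "'a set \<Rightarrow> ('a \<Rightarrow> 'a \<Rightarrow> 'a) \<Rightarrow> 'a \<Rightarrow> 'a \<Rightarrow> bool" where
  "nleq M m s t \<longleftrightarrow> s = m t (m (invm M m s) s)"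

definition idems :: "'a set \<Rightarrow> ('a \<Rightarrow> 'a \<Rightarrow> 'a) \<Rightarrow> 'a set" where
  "idems M m = {e \<in> M. m e e = e}"

definition compatible :: "'a set \<Rightarrow> ('a \<Rightarrow> 'a \<Rightarrow> 'a) \<Rightarrow> 'a \<Rightarrow> 'a \<Rightarrow> bool" where
  "compatible M m a b \<longleftrightarrow>
     m (invm M m a) b \<in> idems M m \<and> m a (invm M m b) \<in> idems M m"

definition is_join :: "'a set \<Rightarrow> ('a \<Rightarrow> 'a \<Rightarrow> 'a) \<Rightarrow> 'a set \<Rightarrow> 'a \<Rightarrow> bool" where
  "is_join M m X j \<longleftrightarrow> j \<in> M \<and> (\<forall>x\<in>X. nleq M m x j)
     \<and> (\<forall>y\<in>M. (\<forall>x\<in>X. nleq M m x y) \<longrightarrow> nleq M m j y)"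

definition is_lub_E :: "'a set \<Rightarrow> ('a \<Rightarrow> 'a \<Rightarrow> 'a) \<Rightarrow> 'a \<Rightarrow> 'a \<Rightarrow> 'a \<Rightarrow> bool" where
  "is_lub_E M m e f j \<longleftrightarrow> j \<in> idems M m \<and> nleq M m e j \<and> nleq M m f j
     \<and> (\<forall>g\<in>idems M m. nleq M m e g \<and> nleq M m f g \<longrightarrow> nleq M m j g)"

definition is_glb_E :: "'a set \<Rightarrow> ('a \<Rightarrow> 'a \<Rightarrow> 'a) \<Rightarrow> 'a \<Rightarrow> 'a \<Rightarrow> 'a \<Rightarrow> bool" where
  "is_glb_E M m e f j \<longleftrightarrow> j \<in> idems M m \<and> nleq M m j e \<and> nleq M m j f
     \<and> (\<forall>g\<in>idems M m. nleq M m g e \<and> nleq M m g f \<longrightarrow> nleq M m g j)"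

definition joinE :: "'a set \<Rightarrow> ('a \<Rightarrow> 'a \<Rightarrow> 'a) \<Rightarrow> 'a \<Rightarrow> 'a \<Rightarrow> 'a" where
  "joinE M m e f = (THE j. is_lub_E M m e f j)"

definition meetE :: "'a set \<Rightarrow> ('a \<Rightarrow> 'a \<Rightarrow> 'a) \<Rightarrow> 'a \<Rightarrow> 'a \<Rightarrow> 'a" where
  "meetE M m e f = (THE j. is_glb_E M m e f j)"

definition idems_boolean :: "'a set \<Rightarrow> ('a \<Rightarrow> 'a \<Rightarrow> 'a) \<Rightarrow> 'a \<Rightarrow> 'a \<Rightarrow> bool" where
  "idems_boolean M m u z \<longleftrightarrow>
     z \<in> idems M m \<and> u \<in> idems M m
   \<and> (\<forall>e\<in>idems M m. nleq M m z e \<and> nleq M m e u)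
   \<and> (\<forall>e\<in>idems M m. \<forall>f\<in>idems M m. (\<exists>j. is_lub_E M m e f j) \<and> (\<exists>j. is_glb_E M m e f j))
   \<and> (\<forall>e\<in>idems M m. \<forall>f\<in>idems M m. \<forall>g\<in>idems M m.
        meetE M m e (joinE M m f g) = joinE M m (meetE M m e f) (meetE M m e g))
   \<and> (\<forall>e\<in>idems M m. \<exists>f\<in>idems M m. meetE M m e f = z \<and> joinE M m e f = u)"

definition boolean_inverse_monoid ::
    "'a set \<Rightarrow> ('a \<Rightarrow> 'a \<Rightarrow> 'a) \<Rightarrow> 'a \<Rightarrow> 'a \<Rightarrow> bool" where
  "boolean_inverse_monoid M m u z \<longleftrightarrow>
     inverse_monoid M m u
   \<and> z \<in> M \<and> (\<forall>x\<in>M. m z x = z \<and> m x z = z)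
   \<and> (\<forall>X. finite X \<and> X \<subseteq> M \<and> (\<forall>a\<in>X. \<forall>b\<in>X. compatible M m a b)
          \<longrightarrow> (\<exists>j. is_join M m X j))
   \<and> (\<forall>X j. finite X \<and> X \<subseteq> M \<and> (\<forall>a\<in>X. \<forall>b\<in>X. compatible M m a b) \<and> is_join M m X j
          \<longrightarrow> (\<forall>s\<in>M. is_join M m ((\<lambda>x. m s x) ` X) (m s j)
                    \<and> is_join M m ((\<lambda>x. m x s) ` X) (m j s)))
   \<and> idems_boolean M m u z"

definition bim_morphism :: "'a set \<Rightarrow> ('a \<Rightarrow> 'a \<Rightarrow> 'a) \<Rightarrow> 'a \<Rightarrow> 'a \<Rightarrow>
    'b set \<Rightarrow> ('b \<Rightarrow> 'b \<Rightarrow> 'b) \<Rightarrow> 'b \<Rightarrow> 'b \<Rightarrow> ('a \<Rightarrow> 'b) \<Rightarrow> bool" where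
  "bim_morphism M m u z N n v w f \<longleftrightarrow>
     monoid_hom M m u N n v f \<and> f z = w
   \<and> (\<forall>a\<in>M. \<forall>b\<in>M. \<forall>j. compatible M m a b \<and> is_join M m {a, b} j
          \<longrightarrow> is_join N n {f a, f b} (f j))"

text \<open>Underlying groupoid of an inverse semigroup: d(s) = s^-1 s, r(s) = s s^-1,
  product s.t = st defined iff d(s) = r(t).  Products and inverses of subsets.\<close>
definition gdom :: "'a set \<Rightarrow> ('a \<Rightarrow> 'a \<Rightarrow> 'a) \<Rightarrow> 'a \<Rightarrow> 'a" where
  "gdom M m s = m (invm M m s) s"

definition gran :: "'a set \<Rightarrow> ('a \<Rightarrow> 'a \<Rightarrow> 'a) \<Rightarrow> 'a \<Rightarrow> 'a" where
  "gran M m s = m s (invm M m s)"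

definition gprod :: "'a set \<Rightarrow> ('a \<Rightarrow> 'a \<Rightarrow> 'a) \<Rightarrow> 'a set \<Rightarrow> 'a set \<Rightarrow> 'a set" where
  "gprod M m A B = {m a b | a b. a \<in> A \<and> b \<in> B \<and> gdom M m a = gran M m b}"

definition ginv :: "'a set \<Rightarrow> ('a \<Rightarrow> 'a \<Rightarrow> 'a) \<Rightarrow> 'a set \<Rightarrow> 'a set" where
  "ginv M m A = invm M m ` A"

text \<open>Identities of the groupoid = idempotents of S.\<close>
definition local_bisection :: "'a set \<Rightarrow> ('a \<Rightarrow> 'a \<Rightarrow> 'a) \<Rightarrow> 'a set \<Rightarrow> bool" where
  "local_bisection M m A \<longleftrightarrow> A \<subseteq> M
     \<and> gprod M m A (ginv M m A) \<subseteq> idems M m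
     \<and> gprod M m (ginv M m A) A \<subseteq> idems M m"

text \<open>K(G): carrier, multiplication, unit (all identities) and zero (empty set).\<close>
definition KG :: "'a set \<Rightarrow> ('a \<Rightarrow> 'a \<Rightarrow> 'a) \<Rightarrow> 'a set set" where
  "KG M m = {A. local_bisection M m A}"

definition down :: "'a set \<Rightarrow> ('a \<Rightarrow> 'a \<Rightarrow> 'a) \<Rightarrow> 'a \<Rightarrow> 'a set" where
  "down M m a = {x \<in> M. nleq M m x a}"

end

theory Submission
  imports Defs
begin



locale invmon =
  fixes M :: "'a set" and mult :: "'a \<Rightarrow> 'a \<Rightarrow> 'a" (infixl "\<cdot>" 70) and one :: 'a
  assumes im: "inverse_monoid M mult one"
begin

lemma im_parts:
  "one \<in> M" "\<And>x y. x \<in> M \<Longrightarrow> y \<in> M \<Longrightarrow> x \<cdot> y \<in> M"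
  "\<And>x y z. x \<in> M \<Longrightarrow> y \<in> M \<Longrightarrow> z \<in> M \<Longrightarrow> (x \<cdot> y) \<cdot> z = x \<cdot> (y \<cdot> z)"
  "\<And>x. x \<in> M \<Longrightarrow> one \<cdot> x = x" "\<And>x. x \<in> M \<Longrightarrow> x \<cdot> one = x"
  "\<And>x. x \<in> M \<Longrightarrow> \<exists>!y. y \<in> M \<and> x = x \<cdot> y \<cdot> x \<and> y = y \<cdot> x \<cdot> y"
  using im unfolding inverse_monoid_def by simp_all

lemma one_closed[simp]: "one \<in> M" by (rule im_parts)
lemma closed[simp]: "x \<in> M \<Longrightarrow> y \<in> M \<Longrightarrow> x \<cdot> y \<in> M" by (rule im_parts)
lemma assoc[simp]: "x \<in> M \<Longrightarrow> y \<in> M \<Longrightarrow> z \<in> M \<Longrightarrow> (x \<cdot> y) \<cdot> z = x \<cdot> (y \<cdot> z)"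
  by (rule im_parts)
lemma lunit[simp]: "x \<in> M \<Longrightarrow> one \<cdot> x = x" by (rule im_parts)
lemma runit[simp]: "x \<in> M \<Longrightarrow> x \<cdot> one = x" by (rule im_parts)

abbreviation iv where "iv x \<equiv> invm M mult x"

lemma inv_props: assumes "x \<in> M"
  shows "iv x \<in> M \<and> x = x \<cdot> iv x \<cdot> x \<and> iv x = iv x \<cdot> x \<cdot> iv x"
proof -
  have "\<exists>!y. y \<in> M \<and> x = x \<cdot> y \<cdot> x \<and> y = y \<cdot> x \<cdot> y"
    using im_parts(6) assms by blast
  from theI'[OF this] show ?thesis unfolding invm_def .
qed

lemma inv_closed[simp]: "x \<in> M \<Longrightarrow> iv x \<in> M"
  using inv_props by blast
lemma inv1[simp]: "x \<in> M \<Longrightarrow> x \<cdot> (iv x \<cdot> x) = x"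
  using inv_props by (metis assoc inv_closed)
lemma inv2[simp]: "x \<in> M \<Longrightarrow> iv x \<cdot> (x \<cdot> iv x) = iv x"
  using inv_props by (metis assoc inv_closed)

lemma inv_unique:
  assumes "x \<in> M" "y \<in> M" "x \<cdot> (y \<cdot> x) = x" "y \<cdot> (x \<cdot> y) = y"
  shows "iv x = y"
proof -
  have "\<exists>!y. y \<in> M \<and> x = x \<cdot> y \<cdot> x \<and> y = y \<cdot> x \<cdot> y"
    using im_parts(6) assms by blast
  moreover have "iv x \<in> M \<and> x = x \<cdot> iv x \<cdot> x \<and> iv x = iv x \<cdot> x \<cdot> iv x"
    by (rule inv_props[OF assms(1)])
  moreover have "y \<in> M \<and> x = x \<cdot> y \<cdot> x \<and> y = y \<cdot> x \<cdot> y" using assms by simp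
  ultimately show ?thesis by blast
qed

definition idem where "idem e \<longleftrightarrow> e \<in> M \<and> e \<cdot> e = e"

lemma idems_eq: "idems M mult = {e. idem e}"
  unfolding idems_def idem_def by auto

lemma idem_M: "idem e \<Longrightarrow> e \<in> M" by (simp add: idem_def)
lemma idem_sq: "idem e \<Longrightarrow> e \<cdot> e = e" by (simp add: idem_def)

lemma idem_inv: "idem e \<Longrightarrow> iv e = e"
  by (rule inv_unique) (auto simp: idem_def simp del: assoc simp add: assoc[symmetric])

lemma inv_inv[simp]: "x \<in> M \<Longrightarrow> iv (iv x) = x"
  by (rule inv_unique) auto

lemma idem_one[simp]: "idem one" by (simp add: idem_def)

lemma idem_prod_aux:
  assumes e: "idem e" and f: "idem f"
  shows "idem (e \<cdot> f)"
proof -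
  have eM: "e \<in> M" and fM: "f \<in> M" using e f idem_M by auto
  define y where "y = iv (e \<cdot> f)"
  have yM: "y \<in> M" using y_def eM fM by simp
  define x where "x = f \<cdot> y \<cdot> e"
  have xM: "x \<in> M" using x_def eM fM yM by simp
  have ee: "e \<cdot> e = e" and ff: "f \<cdot> f = f" using e f idem_sq by auto
  have efy: "e \<cdot> f \<cdot> y \<cdot> (e \<cdot> f) = e \<cdot> f" using inv_props[of "e \<cdot> f"] eM fM y_def by auto
  have yef: "y \<cdot> (e \<cdot> f) \<cdot> y = y" using inv_props[of "e \<cdot> f"] eM fM y_def by auto
  have "x \<cdot> x = f \<cdot> (y \<cdot> (e \<cdot> f) \<cdot> y) \<cdot> e"
    using eM fM yM ee ff by (simp add: x_def)
  also have "\<dots> = x" using yef by (simp add: x_def)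
  finally have xx: "x \<cdot> x = x" .
  have ee': "e \<cdot> (e \<cdot> z) = e \<cdot> z" and ff': "f \<cdot> (f \<cdot> z) = f \<cdot> z" if "z \<in> M" for z
    using that eM fM ee ff by (metis assoc)+
  have 1: "e \<cdot> f \<cdot> x \<cdot> (e \<cdot> f) = e \<cdot> f"
  proof -
    have "e \<cdot> f \<cdot> x \<cdot> (e \<cdot> f) = e \<cdot> f \<cdot> y \<cdot> (e \<cdot> f)"
      using eM fM yM ee' ff' by (simp add: x_def)
    then show ?thesis using efy by simp
  qed
  have 2: "x \<cdot> (e \<cdot> f) \<cdot> x = x"
  proof -
    have "x \<cdot> (e \<cdot> f) \<cdot> x = f \<cdot> (y \<cdot> (e \<cdot> f) \<cdot> y) \<cdot> e"
      using eM fM yM ee' ff' by (simp add: x_def)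
    then show ?thesis using yef by (simp add: x_def)
  qed
  have "iv x = e \<cdot> f"
    apply (rule inv_unique) using xM eM fM 1 2 by auto
  moreover have "iv x = x" using xx xM by (intro idem_inv) (simp add: idem_def)
  ultimately have "x = e \<cdot> f" by simp
  then show ?thesis using xx xM by (simp add: idem_def)
qed

lemma idem_comm:
  assumes e: "idem e" and f: "idem f"
  shows "e \<cdot> f = f \<cdot> e"
proof -
  have eM: "e \<in> M" and fM: "f \<in> M" using e f idem_M by auto
  have ef: "idem (e \<cdot> f)" and fe: "idem (f \<cdot> e)" using idem_prod_aux e f by auto
  have "(e \<cdot> f) \<cdot> ((f \<cdot> e) \<cdot> (e \<cdot> f)) = e \<cdot> f"
  proof -
    have "(e \<cdot> f) \<cdot> ((f \<cdot> e) \<cdot> (e \<cdot> f)) = (e \<cdot> (f \<cdot> f)) \<cdot> ((e \<cdot> e) \<cdot> f)"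
      using eM fM by simp
    also have "\<dots> = (e \<cdot> f) \<cdot> (e \<cdot> f)" using e f by (simp add: idem_sq)
    also have "\<dots> = e \<cdot> f" using ef by (simp add: idem_sq)
    finally show ?thesis .
  qed
  moreover have "(f \<cdot> e) \<cdot> ((e \<cdot> f) \<cdot> (f \<cdot> e)) = f \<cdot> e"
  proof -
    have "(f \<cdot> e) \<cdot> ((e \<cdot> f) \<cdot> (f \<cdot> e)) = (f \<cdot> (e \<cdot> e)) \<cdot> ((f \<cdot> f) \<cdot> e)"
      using eM fM by simp
    also have "\<dots> = (f \<cdot> e) \<cdot> (f \<cdot> e)" using e f by (simp add: idem_sq)
    also have "\<dots> = f \<cdot> e" using fe by (simp add: idem_sq)
    finally show ?thesis .
  qed
  ultimately have "iv (e \<cdot> f) = f \<cdot> e"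
    using eM fM by (intro inv_unique) auto
  then show ?thesis using idem_inv[OF ef] by simp
qed

lemma idem_prod: "idem e \<Longrightarrow> idem f \<Longrightarrow> idem (e \<cdot> f)"
  by (rule idem_prod_aux)

end



context invmon begin

lemma idem_left[simp]: "idem e \<Longrightarrow> z \<in> M \<Longrightarrow> e \<cdot> (e \<cdot> z) = e \<cdot> z"
proof -
  assume a: "idem e" "z \<in> M"
  have "e \<cdot> (e \<cdot> z) = (e \<cdot> e) \<cdot> z" using a by (simp add: idem_M)
  then show ?thesis using a by (simp add: idem_sq)
qed

lemma idem_comm_left: "idem e \<Longrightarrow> idem f \<Longrightarrow> z \<in> M \<Longrightarrow> e \<cdot> (f \<cdot> z) = f \<cdot> (e \<cdot> z)"
proof -
  assume a: "idem e" "idem f" "z \<in> M"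
  have eM: "e \<in> M" "f \<in> M" using a idem_M by auto
  have "e \<cdot> (f \<cdot> z) = (e \<cdot> f) \<cdot> z" using a eM by simp
  also have "\<dots> = (f \<cdot> e) \<cdot> z" by (simp only: idem_comm[OF a(1) a(2)])
  also have "\<dots> = f \<cdot> (e \<cdot> z)" using a eM by simp
  finally show ?thesis .
qed

lemma idem_efe: assumes "idem e" "idem f" shows "e \<cdot> (f \<cdot> e) = f \<cdot> e"
proof -
  have M: "e \<in> M" "f \<in> M" using assms idem_M by auto
  have "e \<cdot> (f \<cdot> e) = (e \<cdot> f) \<cdot> e" using M by simp
  also have "\<dots> = (f \<cdot> e) \<cdot> e" by (simp only: idem_comm[OF assms])
  also have "\<dots> = f \<cdot> e" using M assms by (simp add: idem_sq)
  finally show ?thesis .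
qed

lemma idem_efe': assumes "idem e" "idem f" shows "e \<cdot> (f \<cdot> e) = e \<cdot> f"
  using idem_efe[OF assms] idem_comm[OF assms] by simp

lemma dom_idem[simp]: "x \<in> M \<Longrightarrow> idem (iv x \<cdot> x)"
  unfolding idem_def by (simp flip: assoc) (simp add: assoc)

lemma ran_idem[simp]: "x \<in> M \<Longrightarrow> idem (x \<cdot> iv x)"
  unfolding idem_def by (simp flip: assoc) (simp add: assoc)

lemma inv1'[simp]: "x \<in> M \<Longrightarrow> z \<in> M \<Longrightarrow> x \<cdot> (iv x \<cdot> (x \<cdot> z)) = x \<cdot> z"
proof -
  assume a: "x \<in> M" "z \<in> M"
  have "x \<cdot> (iv x \<cdot> (x \<cdot> z)) = (x \<cdot> (iv x \<cdot> x)) \<cdot> z" by (simp only: assoc inv_closed closed a)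
  also have "\<dots> = x \<cdot> z" using a by simp
  finally show ?thesis .
qed
lemma inv2'[simp]: "x \<in> M \<Longrightarrow> z \<in> M \<Longrightarrow> iv x \<cdot> (x \<cdot> (iv x \<cdot> z)) = iv x \<cdot> z"
proof -
  assume a: "x \<in> M" "z \<in> M"
  have "iv x \<cdot> (x \<cdot> (iv x \<cdot> z)) = (iv x \<cdot> (x \<cdot> iv x)) \<cdot> z" by (simp only: assoc inv_closed closed a)
  also have "\<dots> = iv x \<cdot> z" using a by simp
  finally show ?thesis .
qed

lemma inv_mult: assumes "x \<in> M" "y \<in> M" shows "iv (x \<cdot> y) = iv y \<cdot> iv x"
proof (rule inv_unique)
  have c: "(iv x \<cdot> x) \<cdot> (y \<cdot> iv y) = (y \<cdot> iv y) \<cdot> (iv x \<cdot> x)"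
    using assms by (intro idem_comm) auto
  have c': "iv x \<cdot> (x \<cdot> (y \<cdot> (iv y \<cdot> z))) = y \<cdot> (iv y \<cdot> (iv x \<cdot> (x \<cdot> z)))" if "z \<in> M" for z
  proof -
    have "iv x \<cdot> (x \<cdot> (y \<cdot> (iv y \<cdot> z))) = ((iv x \<cdot> x) \<cdot> (y \<cdot> iv y)) \<cdot> z"
      using assms that by simp
    also have "\<dots> = ((y \<cdot> iv y) \<cdot> (iv x \<cdot> x)) \<cdot> z" by (simp only: c)
    also have "\<dots> = y \<cdot> (iv y \<cdot> (iv x \<cdot> (x \<cdot> z)))" using assms that by simp
    finally show ?thesis .
  qed
  have "x \<cdot> y \<cdot> (iv y \<cdot> iv x \<cdot> (x \<cdot> y)) = x \<cdot> (y \<cdot> (iv y \<cdot> (iv x \<cdot> (x \<cdot> y))))"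
    using assms by simp
  also have "\<dots> = x \<cdot> (iv x \<cdot> (x \<cdot> (y \<cdot> (iv y \<cdot> y))))" using c'[of y] assms by simp
  also have "\<dots> = x \<cdot> y" using assms by simp
  finally show "x \<cdot> y \<cdot> (iv y \<cdot> iv x \<cdot> (x \<cdot> y)) = x \<cdot> y" .
  have "iv y \<cdot> iv x \<cdot> (x \<cdot> y \<cdot> (iv y \<cdot> iv x)) = iv y \<cdot> (iv x \<cdot> (x \<cdot> (y \<cdot> (iv y \<cdot> iv x))))"
    using assms by simp
  also have "\<dots> = iv y \<cdot> (y \<cdot> (iv y \<cdot> (iv x \<cdot> (x \<cdot> iv x))))" using c'[of "iv x"] assms by simp
  also have "\<dots> = iv y \<cdot> iv x" using assms by simp
  finally show "iv y \<cdot> iv x \<cdot> (x \<cdot> y \<cdot> (iv y \<cdot> iv x)) = iv y \<cdot> iv x" .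
qed (use assms in auto)

lemma conj_idem: assumes "idem e" "x \<in> M" shows "idem (x \<cdot> e \<cdot> iv x)"
proof -
  have eM: "e \<in> M" using assms idem_M by auto
  have "x \<cdot> e \<cdot> iv x \<cdot> (x \<cdot> e \<cdot> iv x) = x \<cdot> (e \<cdot> (iv x \<cdot> x)) \<cdot> e \<cdot> iv x"
    using eM assms by simp
  also have "\<dots> = x \<cdot> ((iv x \<cdot> x) \<cdot> e) \<cdot> e \<cdot> iv x"
    using assms by (simp add: idem_comm)
  also have "\<dots> = x \<cdot> e \<cdot> iv x"
    using assms eM by (simp flip: assoc) (simp add: assoc idem_sq)
  finally show ?thesis using eM assms by (simp add: idem_def)
qed

abbreviation le (infix "\<preceq>" 50) where "s \<preceq> t \<equiv> nleq M mult s t"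

lemma le_def': "s \<preceq> t \<longleftrightarrow> s = t \<cdot> (iv s \<cdot> s)" by (simp add: nleq_def)

lemma le_right: assumes "s \<in> M" "t \<in> M" shows "s \<preceq> t \<longleftrightarrow> (\<exists>e. idem e \<and> s = t \<cdot> e)"
proof
  assume "s \<preceq> t" then show "\<exists>e. idem e \<and> s = t \<cdot> e"
    using assms by (intro exI[of _ "iv s \<cdot> s"]) (simp add: le_def')
next
  assume "\<exists>e. idem e \<and> s = t \<cdot> e"
  then obtain e where e: "idem e" "s = t \<cdot> e" by blast
  have eM: "e \<in> M" using e idem_M by auto
  have "iv s \<cdot> s = e \<cdot> (iv t \<cdot> t) \<cdot> e" using e assms eM by (simp add: inv_mult idem_inv)
  also have "\<dots> = (iv t \<cdot> t) \<cdot> e" using e assms eM idem_efe[of e "iv t \<cdot> t"] by simp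
  finally have "t \<cdot> (iv s \<cdot> s) = t \<cdot> e" using assms eM by simp
  then show "s \<preceq> t" using e by (simp add: le_def')
qed

lemma le_left: assumes "s \<in> M" "t \<in> M" shows "s \<preceq> t \<longleftrightarrow> (\<exists>f. idem f \<and> s = f \<cdot> t)"
proof
  assume "s \<preceq> t"
  then obtain e where e: "idem e" "s = t \<cdot> e" using le_right assms by blast
  have eM: "e \<in> M" using e idem_M by auto
  have "t \<cdot> e = (t \<cdot> e \<cdot> iv t) \<cdot> t"
  proof -
    have "(t \<cdot> e \<cdot> iv t) \<cdot> t = t \<cdot> (e \<cdot> (iv t \<cdot> t))" using assms eM by simp
    also have "\<dots> = t \<cdot> ((iv t \<cdot> t) \<cdot> e)" using e assms by (simp add: idem_comm)
    also have "\<dots> = t \<cdot> e" using assms eM by simp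
    finally show ?thesis by simp
  qed
  then show "\<exists>f. idem f \<and> s = f \<cdot> t" using e conj_idem assms by metis
next
  assume "\<exists>f. idem f \<and> s = f \<cdot> t"
  then obtain f where f: "idem f" "s = f \<cdot> t" by blast
  have fM: "f \<in> M" using f idem_M by auto
  have "f \<cdot> t = t \<cdot> (iv t \<cdot> f \<cdot> t)"
  proof -
    have "t \<cdot> (iv t \<cdot> f \<cdot> t) = (t \<cdot> iv t) \<cdot> (f \<cdot> t)" using assms fM by simp
    also have "\<dots> = f \<cdot> ((t \<cdot> iv t) \<cdot> t)" using f assms fM by (simp add: idem_comm_left del: assoc)
    also have "\<dots> = f \<cdot> t" using assms fM by simp
    finally show ?thesis by simp
  qed
  moreover have "idem (iv t \<cdot> f \<cdot> t)" using conj_idem[of f "iv t"] f assms by simp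
  ultimately show "s \<preceq> t" using le_right assms f by auto
qed

lemma le_ran: assumes "s \<preceq> t" "s \<in> M" "t \<in> M" shows "s = (s \<cdot> iv s) \<cdot> t"
proof -
  obtain f where f: "idem f" "s = f \<cdot> t" using le_left assms by blast
  have fM: "f \<in> M" using f idem_M by auto
  have "s \<cdot> iv s = f \<cdot> (t \<cdot> iv t) \<cdot> f" using f assms fM by (simp add: inv_mult idem_inv)
  also have "\<dots> = f \<cdot> (t \<cdot> iv t)" using f assms fM idem_efe'[of f "t \<cdot> iv t"] by simp
  finally have "(s \<cdot> iv s) \<cdot> t = f \<cdot> t" using assms fM by simp
  then show ?thesis using f by simp
qed

lemma le_refl[simp]: "s \<in> M \<Longrightarrow> s \<preceq> s"
  by (simp add: le_def')

lemma le_trans: assumes "r \<preceq> s" "s \<preceq> t" "r \<in> M" "s \<in> M" "t \<in> M" shows "r \<preceq> t"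
proof -
  obtain e where e: "idem e" "r = s \<cdot> e" using le_right assms by blast
  obtain f where f: "idem f" "s = t \<cdot> f" using le_right assms by blast
  have "r = t \<cdot> (f \<cdot> e)" using e f assms by (simp add: idem_M)
  then show ?thesis using le_right assms idem_prod e f by blast
qed

lemma le_antisym: assumes "s \<preceq> t" "t \<preceq> s" "s \<in> M" "t \<in> M" shows "s = t"
proof -
  obtain e where e: "idem e" "s = t \<cdot> e" using le_right assms by blast
  obtain f where f: "idem f" "t = s \<cdot> f" using le_right assms by blast
  have M: "e \<in> M" "f \<in> M" using e f idem_M by auto
  have 1: "s = s \<cdot> (f \<cdot> e)" using e f M assms by simp
  have "s \<cdot> f = s \<cdot> (f \<cdot> e) \<cdot> f" using 1 by simp
  also have "\<dots> = s \<cdot> (f \<cdot> (e \<cdot> f))" using M assms by simp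
  also have "\<dots> = s \<cdot> (f \<cdot> e)" using idem_efe'[OF f(1) e(1)] by simp
  also have "\<dots> = s" using 1 by simp
  finally show ?thesis using f by simp
qed

lemma le_mult_left: assumes "s \<preceq> t" "s \<in> M" "t \<in> M" "z \<in> M" shows "z \<cdot> s \<preceq> z \<cdot> t"
proof -
  obtain e where e: "idem e" "s = t \<cdot> e" using le_right assms by blast
  have "z \<cdot> s = (z \<cdot> t) \<cdot> e" using e assms idem_M by simp
  moreover have "z \<cdot> s \<in> M" "z \<cdot> t \<in> M" using assms by auto
  ultimately show ?thesis using le_right[of "z \<cdot> s" "z \<cdot> t"] e(1) by blast
qed

lemma le_mult_right: assumes "s \<preceq> t" "s \<in> M" "t \<in> M" "z \<in> M" shows "s \<cdot> z \<preceq> t \<cdot> z"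
proof -
  obtain f where f: "idem f" "s = f \<cdot> t" using le_left assms by blast
  have "s \<cdot> z = f \<cdot> (t \<cdot> z)" using f assms idem_M by simp
  moreover have "s \<cdot> z \<in> M" "t \<cdot> z \<in> M" using assms by auto
  ultimately show ?thesis using le_left[of "s \<cdot> z" "t \<cdot> z"] f(1) by blast
qed

lemma le_inv: assumes "s \<preceq> t" "s \<in> M" "t \<in> M" shows "iv s \<preceq> iv t"
proof -
  obtain e where e: "idem e" "s = t \<cdot> e" using le_right assms by blast
  then have "iv s = e \<cdot> iv t" using assms by (simp add: inv_mult idem_inv idem_M)
  moreover have "iv s \<in> M" "iv t \<in> M" using assms by auto
  ultimately show ?thesis using le_left[of "iv s" "iv t"] e(1) by blast
qed

lemma le_idem_iff: assumes "idem e" "idem f" shows "e \<preceq> f \<longleftrightarrow> e = f \<cdot> e"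
proof -
  have "iv e \<cdot> e = e" using assms by (simp add: idem_inv idem_sq)
  then show ?thesis by (simp add: le_def')
qed

lemma le_idem_iff': assumes "idem e" "idem f" shows "e \<preceq> f \<longleftrightarrow> e = e \<cdot> f"
  using le_idem_iff[OF assms] idem_comm[OF assms] by simp

lemma le_idem_idem: assumes "s \<preceq> f" "idem f" "s \<in> M" shows "idem s"
proof -
  obtain e where e: "idem e" "s = f \<cdot> e" using le_right assms idem_M by blast
  then show ?thesis using idem_prod assms by simp
qed

lemma idem_le_one: assumes "idem e" shows "e \<preceq> one"
proof -
  have "e = one \<cdot> e" "e \<in> M" using assms idem_M by auto
  then show ?thesis using le_right[of e one] assms by auto
qed

lemma idem_prod_le1: assumes "idem e" "idem f" shows "e \<cdot> f \<preceq> e"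
proof -
  have "e \<cdot> f \<in> M" "e \<in> M" using assms idem_M by auto
  then show ?thesis using le_right[of "e \<cdot> f" e] assms by blast
qed

lemma idem_prod_le2: assumes "idem e" "idem f" shows "e \<cdot> f \<preceq> f"
proof -
  have "e \<cdot> f \<in> M" "f \<in> M" using assms idem_M by auto
  then show ?thesis using le_left[of "e \<cdot> f" f] assms by blast
qed

lemma le_dom: assumes "s \<preceq> t" "s \<in> M" "t \<in> M" shows "iv s \<cdot> s \<preceq> iv t \<cdot> t"
proof -
  have 1: "iv s \<cdot> s \<preceq> iv t \<cdot> s" using le_mult_right[OF le_inv[OF assms]] assms by simp
  have 2: "iv t \<cdot> s \<preceq> iv t \<cdot> t" using le_mult_left[OF assms] assms by simp
  show ?thesis using le_trans[OF 1 2] assms by simp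
qed

lemma le_ran': assumes "s \<preceq> t" "s \<in> M" "t \<in> M" shows "s \<cdot> iv s \<preceq> t \<cdot> iv t"
proof -
  have 1: "s \<cdot> iv s \<preceq> s \<cdot> iv t" using le_mult_left[OF le_inv[OF assms]] assms by simp
  have 2: "s \<cdot> iv t \<preceq> t \<cdot> iv t" using le_mult_right[OF assms] assms by simp
  show ?thesis using le_trans[OF 1 2] assms by simp
qed

end



context invmon begin

definition pc where "pc X \<longleftrightarrow> (\<forall>a\<in>X. \<forall>b\<in>X. compatible M mult a b)"

lemma join_M: "is_join M mult X j \<Longrightarrow> j \<in> M" by (simp add: is_join_def)
lemma join_ub: "is_join M mult X j \<Longrightarrow> x \<in> X \<Longrightarrow> x \<preceq> j" by (simp add: is_join_def)
lemma join_least: "is_join M mult X j \<Longrightarrow> y \<in> M \<Longrightarrow> (\<And>x. x \<in> X \<Longrightarrow> x \<preceq> y) \<Longrightarrow> j \<preceq> y"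
  by (simp add: is_join_def)
lemma join_I: "j \<in> M \<Longrightarrow> (\<And>x. x \<in> X \<Longrightarrow> x \<preceq> j) \<Longrightarrow> (\<And>y. y \<in> M \<Longrightarrow> (\<And>x. x \<in> X \<Longrightarrow> x \<preceq> y) \<Longrightarrow> j \<preceq> y)
   \<Longrightarrow> is_join M mult X j"
  by (simp add: is_join_def)

lemma join_unique: assumes "is_join M mult X j" "is_join M mult X j'" shows "j = j'"
proof -
  have "j \<preceq> j'" using assms by (meson join_M join_least join_ub)
  moreover have "j' \<preceq> j" using assms by (meson join_M join_least join_ub)
  ultimately show ?thesis using le_antisym assms join_M by blast
qed

lemma join_subset_M: assumes "is_join M mult X j" "X' \<subseteq> X" shows "\<forall>x\<in>X'. x \<preceq> j"
  using assms join_ub by blast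

lemma join_family:
  assumes "\<And>i. i \<in> I \<Longrightarrow> is_join M mult (X i) (j i)" "is_join M mult (j ` I) k"
    and "\<And>i x. i \<in> I \<Longrightarrow> x \<in> X i \<Longrightarrow> x \<in> M"
  shows "is_join M mult (\<Union>i\<in>I. X i) k"
proof (rule join_I)
  show "k \<in> M" using assms join_M by blast
  fix x assume "x \<in> (\<Union>i\<in>I. X i)"
  then obtain i where i: "i \<in> I" "x \<in> X i" by blast
  have "x \<preceq> j i" using assms(1) i join_ub by blast
  moreover have "j i \<preceq> k" using assms(2) i join_ub by blast
  ultimately show "x \<preceq> k" using le_trans assms i join_M \<open>k \<in> M\<close> by blast
next
  fix y assume y: "y \<in> M" "\<And>x. x \<in> (\<Union>i\<in>I. X i) \<Longrightarrow> x \<preceq> y"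
  have "j i \<preceq> y" if "i \<in> I" for i
    using join_least[OF assms(1)[OF that] y(1)] y(2) that by blast
  then show "k \<preceq> y" using join_least[OF assms(2) y(1)] by blast
qed

lemma join_union:
  assumes "is_join M mult X a" "is_join M mult Y b" "is_join M mult {a, b} k"
    and "X \<subseteq> M" "Y \<subseteq> M"
  shows "is_join M mult (X \<union> Y) k"
proof (rule join_I)
  have kM: "k \<in> M" "a \<in> M" "b \<in> M" using assms join_M by blast+
  then show "k \<in> M" by simp
  have ak: "a \<preceq> k" "b \<preceq> k" using join_ub[OF assms(3)] by auto
  fix x assume x: "x \<in> X \<union> Y"
  show "x \<preceq> k"
  proof (cases "x \<in> X")
    case True
    then have "x \<preceq> a" "x \<in> M" using join_ub[OF assms(1)] assms(4) by auto
    then show ?thesis using le_trans[of x a k] kM ak by simp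
  next
    case False
    then have "x \<in> Y" using x by simp
    then have "x \<preceq> b" "x \<in> M" using join_ub[OF assms(2)] assms(5) by auto
    then show ?thesis using le_trans[of x b k] kM ak by simp
  qed
next
  fix y assume y: "y \<in> M" "\<And>x. x \<in> X \<union> Y \<Longrightarrow> x \<preceq> y"
  have "a \<preceq> y" using join_least[OF assms(1) y(1)] y(2) by simp
  moreover have "b \<preceq> y" using join_least[OF assms(2) y(1)] y(2) by simp
  ultimately show "k \<preceq> y" using join_least[OF assms(3) y(1)] by auto
qed

lemma join_union_rev:
  assumes "is_join M mult X a" "is_join M mult Y b" "is_join M mult (X \<union> Y) k"
    and "X \<subseteq> M" "Y \<subseteq> M"
  shows "is_join M mult {a, b} k"
proof (rule join_I)
  have kM: "k \<in> M" "a \<in> M" "b \<in> M" using assms join_M by blast+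
  then show "k \<in> M" by simp
  have "a \<preceq> k" using join_least[OF assms(1) \<open>k \<in> M\<close>] join_ub[OF assms(3)] by simp
  moreover have "b \<preceq> k" using join_least[OF assms(2) \<open>k \<in> M\<close>] join_ub[OF assms(3)] by simp
  ultimately show "x \<preceq> k" if "x \<in> {a, b}" for x using that by auto
next
  fix y assume y: "y \<in> M" "\<And>x. x \<in> {a, b} \<Longrightarrow> x \<preceq> y"
  have ay: "a \<preceq> y" "b \<preceq> y" using y by auto
  have kM: "a \<in> M" "b \<in> M" using assms join_M by blast+
  have "x \<preceq> y" if "x \<in> X \<union> Y" for x
  proof (cases "x \<in> X")
    case True
    then have "x \<preceq> a" "x \<in> M" using join_ub[OF assms(1)] assms(4) by auto
    then show ?thesis using le_trans[of x a y] kM ay y by simp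
  next
    case False
    then have "x \<in> Y" using that by simp
    then have "x \<preceq> b" "x \<in> M" using join_ub[OF assms(2)] assms(5) by auto
    then show ?thesis using le_trans[of x b y] kM ay y by simp
  qed
  then show "k \<preceq> y" using join_least[OF assms(3) y(1)] by blast
qed

lemma idem_compatible: "idem e \<Longrightarrow> idem f \<Longrightarrow> compatible M mult e f"
  by (simp add: compatible_def idem_inv idem_prod idems_eq)

lemma pc_idem: "X \<subseteq> {e. idem e} \<Longrightarrow> pc X"
  using idem_compatible unfolding pc_def by blast

lemma join_idem: assumes "is_join M mult X j" "X \<subseteq> {e. idem e}" shows "idem j"
proof -
  have "j \<preceq> one" using join_least[OF assms(1) one_closed] assms(2) idem_le_one by blast
  then show ?thesis using le_idem_idem assms join_M by auto
qed

end

locale bim = invmon M mult one for M and mult (infixl "\<cdot>" 70) and one +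
  fixes zero
  assumes bim: "boolean_inverse_monoid M mult one zero"
begin

lemma zero_M[simp]: "zero \<in> M" using bim unfolding boolean_inverse_monoid_def by blast
lemma zero_l[simp]: "x \<in> M \<Longrightarrow> zero \<cdot> x = zero"
  using bim unfolding boolean_inverse_monoid_def by blast
lemma zero_r[simp]: "x \<in> M \<Longrightarrow> x \<cdot> zero = zero"
  using bim unfolding boolean_inverse_monoid_def by blast
lemma idem_zero[simp]: "idem zero" by (simp add: idem_def)

lemma join_ex: "finite X \<Longrightarrow> X \<subseteq> M \<Longrightarrow> pc X \<Longrightarrow> \<exists>j. is_join M mult X j"
  using bim unfolding boolean_inverse_monoid_def pc_def by blast

lemma distrib:
  assumes "finite X" "X \<subseteq> M" "pc X" "is_join M mult X j" "s \<in> M"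
  shows "is_join M mult ((\<lambda>x. s \<cdot> x) ` X) (s \<cdot> j)" "is_join M mult ((\<lambda>x. x \<cdot> s) ` X) (j \<cdot> s)"
proof -
  have "\<forall>X j. finite X \<and> X \<subseteq> M \<and> (\<forall>a\<in>X. \<forall>b\<in>X. compatible M mult a b) \<and> is_join M mult X j
          \<longrightarrow> (\<forall>s\<in>M. is_join M mult ((\<lambda>x. s \<cdot> x) ` X) (s \<cdot> j)
                    \<and> is_join M mult ((\<lambda>x. x \<cdot> s) ` X) (j \<cdot> s))"
    using bim unfolding boolean_inverse_monoid_def by blast
  then show "is_join M mult ((\<lambda>x. s \<cdot> x) ` X) (s \<cdot> j)" "is_join M mult ((\<lambda>x. x \<cdot> s) ` X) (j \<cdot> s)"
    using assms unfolding pc_def by blast+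
qed

lemma zero_le: "x \<in> M \<Longrightarrow> zero \<preceq> x"
  by (simp add: le_def' idem_inv)

lemma join_empty: "is_join M mult {} zero"
  by (rule join_I) (auto simp: zero_le)

lemma join_single: "x \<in> M \<Longrightarrow> is_join M mult {x} x"
  by (rule join_I) auto

lemma join_insert_zero: assumes "is_join M mult X j" shows "is_join M mult (insert zero X) j"
  using assms unfolding is_join_def by (auto simp: zero_le)

lemma join_zero_pair: "x \<in> M \<Longrightarrow> is_join M mult {x, zero} x"
  using join_insert_zero[OF join_single[of x]] by (simp add: insert_commute)

lemma rel_compl_unique:
  assumes r: "idem r" and r': "idem r'" and q: "idem q"
    and rq: "r \<cdot> q = zero" and r'q: "r' \<cdot> q = zero"
    and j: "is_join M mult {r, q} p" and j': "is_join M mult {r', q} p"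
  shows "r = r'"
proof -
  have M: "r \<in> M" "r' \<in> M" "q \<in> M" using r r' q idem_M by auto
  have p: "idem p" using join_idem[OF j] r q by auto
  have h: "r = r \<cdot> r'" if r: "idem r" and r': "idem r'" and rq: "r \<cdot> q = zero"
      and j: "is_join M mult {r, q} p" and j': "is_join M mult {r', q} p" for r r'
  proof -
    have M: "r \<in> M" "r' \<in> M" using r r' idem_M by auto
    have "is_join M mult ((\<lambda>x. r \<cdot> x) ` {r', q}) (r \<cdot> p)"
      using distrib(1)[OF _ _ _ j'] M q idem_M pc_idem[of "{r', q}"] r' by auto
    then have "is_join M mult {r \<cdot> r', zero} (r \<cdot> p)" using rq by simp
    then have "r \<cdot> p = r \<cdot> r'" using join_unique join_zero_pair M by auto
    moreover have "r \<preceq> p" using join_ub[OF j] by simp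
    then have "r = r \<cdot> p" using le_idem_iff' r p by blast
    ultimately show ?thesis by (rule trans[rotated])
  qed
  have "r = r \<cdot> r'" using h r r' rq j j' by blast
  moreover have "r' = r' \<cdot> r" using h r r' r'q j j' by blast
  moreover have "r \<cdot> r' = r' \<cdot> r" using idem_comm r r' by blast
  ultimately show ?thesis by (metis (no_types))
qed

lemma glb_prod: assumes "idem e" "idem f" shows "is_glb_E M mult e f (e \<cdot> f)"
  unfolding is_glb_E_def
proof (intro conjI ballI impI)
  show "e \<cdot> f \<in> idems M mult" using assms idem_prod idems_eq by auto
  show "e \<cdot> f \<preceq> e" "e \<cdot> f \<preceq> f" using assms idem_prod_le1 idem_prod_le2 by auto
  fix g assume g: "g \<in> idems M mult" "g \<preceq> e \<and> g \<preceq> f"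
  have gi: "idem g" using g idems_eq by auto
  have "g = e \<cdot> g" "g = f \<cdot> g" using g gi assms le_idem_iff by blast+
  then have 1: "e \<cdot> g = g" "f \<cdot> g = g" by (auto dest: sym)
  have "(e \<cdot> f) \<cdot> g = e \<cdot> (f \<cdot> g)" using assms gi idem_M by simp
  also have "\<dots> = g" using 1 by simp
  finally have "g = (e \<cdot> f) \<cdot> g" by simp
  then show "g \<preceq> e \<cdot> f" using le_idem_iff gi assms idem_prod by blast
qed

lemma glb_unique: assumes "is_glb_E M mult e f j" "is_glb_E M mult e f j'" shows "j = j'"
proof -
  have "j \<preceq> j'" "j' \<preceq> j" using assms unfolding is_glb_E_def by blast+
  moreover have "j \<in> M" "j' \<in> M" using assms unfolding is_glb_E_def idems_def by auto
  ultimately show ?thesis using le_antisym by blast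
qed

lemma lub_unique: assumes "is_lub_E M mult e f j" "is_lub_E M mult e f j'" shows "j = j'"
proof -
  have "j \<preceq> j'" "j' \<preceq> j" using assms unfolding is_lub_E_def by blast+
  moreover have "j \<in> M" "j' \<in> M" using assms unfolding is_lub_E_def idems_def by auto
  ultimately show ?thesis using le_antisym by blast
qed

lemma compl_ex: assumes q: "idem q" shows "\<exists>c. idem c \<and> q \<cdot> c = zero \<and> is_join M mult {q, c} one"
proof -
  have ib: "idems_boolean M mult one zero" using bim unfolding boolean_inverse_monoid_def by blast
  have qE: "q \<in> idems M mult" using q idems_eq by auto
  obtain c where c: "c \<in> idems M mult" "meetE M mult q c = zero" "joinE M mult q c = one"
    using ib qE unfolding idems_boolean_def by blast
  have ci: "idem c" using c idems_eq by auto
  have "meetE M mult q c = q \<cdot> c" unfolding meetE_def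
    using glb_prod[OF q ci] glb_unique by blast
  then have qc: "q \<cdot> c = zero" using c by simp
  obtain l where l: "is_lub_E M mult q c l" using ib qE c(1) unfolding idems_boolean_def by blast
  have "joinE M mult q c = l" unfolding joinE_def using l lub_unique by blast
  then have lub: "is_lub_E M mult q c one" using l c by simp
  have cM: "c \<in> M" "q \<in> M" using ci q idem_M by auto
  obtain j where j: "is_join M mult {q, c} j" using join_ex[of "{q, c}"] cM pc_idem[of "{q,c}"] q ci by auto
  have ji: "idem j" using join_idem[OF j] q ci by auto
  have "one \<preceq> j" using lub ji join_ub[OF j] idems_eq unfolding is_lub_E_def by auto
  moreover have "j \<preceq> one" using ji idem_le_one by auto
  ultimately have "j = one" using le_antisym ji idem_M by auto
  then show ?thesis using j ci qc by blast
qed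

end



context invmon begin

abbreviation dd where "dd x \<equiv> iv x \<cdot> x"
abbreviation rr where "rr x \<equiv> x \<cdot> iv x"

lemma gdom_eq[simp]: "gdom M mult x = iv x \<cdot> x" by (simp add: gdom_def)
lemma gran_eq[simp]: "gran M mult x = x \<cdot> iv x" by (simp add: gran_def)

lemma idem_dd: "idem e \<Longrightarrow> iv e \<cdot> e = e" by (simp add: idem_inv idem_sq)
lemma idem_rr: "idem e \<Longrightarrow> e \<cdot> iv e = e" by (simp add: idem_inv idem_sq)

lemma dd_inv[simp]: "x \<in> M \<Longrightarrow> iv (iv x) \<cdot> iv x = x \<cdot> iv x" by simp
lemma dd_prod: assumes "x \<in> M" "z \<in> M" "iv x \<cdot> x = z \<cdot> iv z"
  shows "iv (x \<cdot> z) \<cdot> (x \<cdot> z) = iv z \<cdot> z"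
proof -
  have "iv (x \<cdot> z) \<cdot> (x \<cdot> z) = iv z \<cdot> ((iv x \<cdot> x) \<cdot> z)" using assms(1,2) by (simp add: inv_mult)
  also have "\<dots> = iv z \<cdot> z" by (subst assms(3)) (use assms(1,2) in simp)
  finally show ?thesis .
qed
lemma rr_prod: assumes "x \<in> M" "z \<in> M" "iv x \<cdot> x = z \<cdot> iv z"
  shows "(x \<cdot> z) \<cdot> iv (x \<cdot> z) = x \<cdot> iv x"
proof -
  have "(x \<cdot> z) \<cdot> iv (x \<cdot> z) = x \<cdot> ((z \<cdot> iv z) \<cdot> iv x)" using assms(1,2) by (simp add: inv_mult)
  also have "\<dots> = x \<cdot> iv x" by (subst assms(3)[symmetric]) (use assms(1,2) in simp)
  finally show ?thesis .
qed

lemma grpd_L: assumes "x \<in> M" "y \<in> M" "idem (x \<cdot> iv y)" "iv x \<cdot> x = iv y \<cdot> y"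
  shows "x = y"
proof -
  define g where "g = x \<cdot> iv y"
  have gM: "g \<in> M" using assms g_def by simp
  have "g = iv g" using assms idem_inv g_def by simp
  then have g2: "g = y \<cdot> iv x" using assms g_def by (simp add: inv_mult)
  have gy: "g \<cdot> y = x"
  proof -
    have "g \<cdot> y = x \<cdot> (iv y \<cdot> y)" using g_def assms by simp
    also have "\<dots> = x \<cdot> (iv x \<cdot> x)" by (subst assms(4)) simp
    finally show ?thesis using assms(1) by simp
  qed
  have gx: "g \<cdot> x = y"
  proof -
    have "g \<cdot> x = y \<cdot> (iv x \<cdot> x)" using g2 assms by simp
    also have "\<dots> = y \<cdot> (iv y \<cdot> y)" by (subst assms(4)) simp
    finally show ?thesis using assms(2) by simp
  qed
  have "g \<cdot> (g \<cdot> y) = g \<cdot> y" using assms(3) g_def gM assms idem_left by blast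
  then show ?thesis using gx gy by simp
qed

lemma grpd_L': assumes "x \<in> M" "y \<in> M" "idem (iv x \<cdot> y)" "x \<cdot> iv x = y \<cdot> iv y"
  shows "x = y"
proof -
  have "iv x = iv y" using grpd_L[of "iv x" "iv y"] assms by simp
  then have "iv (iv x) = iv (iv y)" by simp
  then show ?thesis using assms(1,2) by simp
qed

lemma KG_iff: "A \<in> KG M mult \<longleftrightarrow> A \<subseteq> M \<and> inj_on dd A \<and> inj_on rr A"
proof
  assume "A \<in> KG M mult"
  then have A: "A \<subseteq> M" "gprod M mult A (ginv M mult A) \<subseteq> idems M mult"
     "gprod M mult (ginv M mult A) A \<subseteq> idems M mult"
    unfolding KG_def local_bisection_def by auto
  have "inj_on dd A"
  proof (rule inj_onI)
    fix x y assume xy: "x \<in> A" "y \<in> A" "dd x = dd y"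
    have "iv y \<in> iv ` A" "dd x = rr (iv y)" using xy A(1) by auto
    then have "x \<cdot> iv y \<in> gprod M mult A (ginv M mult A)"
      unfolding gprod_def ginv_def using xy by auto
    then have "idem (x \<cdot> iv y)" using A(2) idems_eq by auto
    then show "x = y" using grpd_L xy A(1) by auto
  qed
  moreover have "inj_on rr A"
  proof (rule inj_onI)
    fix x y assume xy: "x \<in> A" "y \<in> A" "rr x = rr y"
    have "iv x \<in> iv ` A" "dd (iv x) = rr y" using xy A(1) by auto
    then have "iv x \<cdot> y \<in> gprod M mult (ginv M mult A) A"
      unfolding gprod_def ginv_def using xy by auto
    then have "idem (iv x \<cdot> y)" using A(3) idems_eq by auto
    then show "x = y" using grpd_L' xy A(1) by auto
  qed
  ultimately show "A \<subseteq> M \<and> inj_on dd A \<and> inj_on rr A" using A by blast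
next
  assume A: "A \<subseteq> M \<and> inj_on dd A \<and> inj_on rr A"
  have "gprod M mult A (ginv M mult A) \<subseteq> idems M mult"
  proof
    fix z assume "z \<in> gprod M mult A (ginv M mult A)"
    then obtain a b where ab: "a \<in> A" "b \<in> A" "z = a \<cdot> iv b" "dd a = dd b"
      unfolding gprod_def ginv_def using A by auto
    then have "a = b" using A inj_onD[of dd A a b] by blast
    then show "z \<in> idems M mult" using ab A idems_eq by auto
  qed
  moreover have "gprod M mult (ginv M mult A) A \<subseteq> idems M mult"
  proof
    fix z assume "z \<in> gprod M mult (ginv M mult A) A"
    then obtain a b where ab: "a \<in> A" "b \<in> A" "z = iv a \<cdot> b" "rr a = rr b"
      unfolding gprod_def ginv_def using A by auto
    then have "a = b" using A inj_onD[of rr A a b] by blast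
    then show "z \<in> idems M mult" using ab A idems_eq by auto
  qed
  ultimately show "A \<in> KG M mult" using A unfolding KG_def local_bisection_def by auto
qed

lemma KG_sub: "A \<in> KG M mult \<Longrightarrow> B \<subseteq> A \<Longrightarrow> B \<in> KG M mult"
  unfolding KG_iff by (meson inj_on_subset subset_trans)

lemma KG_idems: assumes "X \<subseteq> {e. idem e}" shows "X \<in> KG M mult"
proof -
  have "X \<subseteq> M" using assms idem_M by auto
  moreover have "inj_on dd X"
  proof (rule inj_onI)
    fix x y assume "x \<in> X" "y \<in> X" "dd x = dd y"
    then show "x = y" using assms idem_dd[of x] idem_dd[of y] by auto
  qed
  moreover have "inj_on rr X"
  proof (rule inj_onI)
    fix x y assume "x \<in> X" "y \<in> X" "rr x = rr y"
    then show "x = y" using assms idem_rr[of x] idem_rr[of y] by auto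
  qed
  ultimately show ?thesis by (simp add: KG_iff)
qed

lemma KG_single: "x \<in> M \<Longrightarrow> {x} \<in> KG M mult"
  by (simp add: KG_iff)

lemma KG_empty: "{} \<in> KG M mult"
  by (simp add: KG_iff)

lemma KG_down: assumes "a \<in> M" shows "down M mult a \<in> KG M mult"
proof -
  have D: "down M mult a \<subseteq> M" unfolding down_def by auto
  have "inj_on dd (down M mult a)"
  proof (rule inj_onI)
    fix x y assume xy: "x \<in> down M mult a" "y \<in> down M mult a" "dd x = dd y"
    then have "x = a \<cdot> dd x" "y = a \<cdot> dd y" unfolding down_def le_def' by auto
    then show "x = y" using xy by simp
  qed
  moreover have "inj_on rr (down M mult a)"
  proof (rule inj_onI)
    fix x y assume xy: "x \<in> down M mult a" "y \<in> down M mult a" "rr x = rr y"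
    then have M: "x \<in> M" "y \<in> M" "x \<preceq> a" "y \<preceq> a" unfolding down_def by auto
    have "x = rr x \<cdot> a" using le_ran[of x a] M assms by simp
    also have "\<dots> = rr y \<cdot> a" using xy by simp
    also have "\<dots> = y" using le_ran[of y a] M assms by simp
    finally show "x = y" .
  qed
  ultimately show ?thesis using D by (simp add: KG_iff)
qed

lemma KG_prod: assumes A: "A \<in> KG M mult" and B: "B \<in> KG M mult"
  shows "gprod M mult A B \<in> KG M mult"
proof -
  have AM: "A \<subseteq> M" "B \<subseteq> M" using A B KG_iff by auto
  have P: "gprod M mult A B = {a \<cdot> b | a b. a \<in> A \<and> b \<in> B \<and> dd a = rr b}"
    unfolding gprod_def by simp
  have sub: "gprod M mult A B \<subseteq> M" using P AM by (auto intro!: closed)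
  have "inj_on dd (gprod M mult A B)"
  proof (rule inj_onI)
    fix x y assume xy: "x \<in> gprod M mult A B" "y \<in> gprod M mult A B" "dd x = dd y"
    obtain a b where ab: "a \<in> A" "b \<in> B" "dd a = rr b" "x = a \<cdot> b" using xy P by auto
    obtain a' b' where ab': "a' \<in> A" "b' \<in> B" "dd a' = rr b'" "y = a' \<cdot> b'" using xy P by auto
    have M: "a \<in> M" "b \<in> M" "a' \<in> M" "b' \<in> M" using AM ab ab' by auto
    have e1: "iv (a \<cdot> b) \<cdot> (a \<cdot> b) = iv b \<cdot> b" by (rule dd_prod) (use M ab in auto)
    have e2: "iv (a' \<cdot> b') \<cdot> (a' \<cdot> b') = iv b' \<cdot> b'" by (rule dd_prod) (use M ab' in auto)
    have "dd b = dd x" unfolding ab(4) by (rule e1[symmetric])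
    also have "\<dots> = dd y" by (rule xy(3))
    also have "\<dots> = dd b'" unfolding ab'(4) by (rule e2)
    finally have "dd b = dd b'" .
    then have "b = b'" using B ab ab' KG_iff inj_onD[of dd B b b'] by blast
    then have "dd a = dd a'" using ab ab' by simp
    then have "a = a'" using A ab ab' KG_iff inj_onD[of dd A a a'] by blast
    then show "x = y" using ab ab' \<open>b = b'\<close> by simp
  qed
  moreover have "inj_on rr (gprod M mult A B)"
  proof (rule inj_onI)
    fix x y assume xy: "x \<in> gprod M mult A B" "y \<in> gprod M mult A B" "rr x = rr y"
    obtain a b where ab: "a \<in> A" "b \<in> B" "dd a = rr b" "x = a \<cdot> b" using xy P by auto
    obtain a' b' where ab': "a' \<in> A" "b' \<in> B" "dd a' = rr b'" "y = a' \<cdot> b'" using xy P by auto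
    have M: "a \<in> M" "b \<in> M" "a' \<in> M" "b' \<in> M" using AM ab ab' by auto
    have e1: "(a \<cdot> b) \<cdot> iv (a \<cdot> b) = a \<cdot> iv a" by (rule rr_prod) (use M ab in auto)
    have e2: "(a' \<cdot> b') \<cdot> iv (a' \<cdot> b') = a' \<cdot> iv a'" by (rule rr_prod) (use M ab' in auto)
    have "rr a = rr x" unfolding ab(4) by (rule e1[symmetric])
    also have "\<dots> = rr y" by (rule xy(3))
    also have "\<dots> = rr a'" unfolding ab'(4) by (rule e2)
    finally have "rr a = rr a'" .
    then have "a = a'" using A ab ab' KG_iff inj_onD[of rr A a a'] by blast
    then have "rr b = rr b'" using ab ab' by simp
    then have "b = b'" using B ab ab' KG_iff inj_onD[of rr B b b'] by blast
    then show "x = y" using ab ab' \<open>a = a'\<close> by simp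
  qed
  ultimately show ?thesis using sub by (simp add: KG_iff)
qed

end



context invmon begin

lemma KG_M: "A \<in> KG M mult \<Longrightarrow> x \<in> A \<Longrightarrow> x \<in> M"
  using KG_iff by blast

lemma KG_inj_dd: "A \<in> KG M mult \<Longrightarrow> x \<in> A \<Longrightarrow> y \<in> A \<Longrightarrow> dd x = dd y \<Longrightarrow> x = y"
  using KG_iff inj_onD[of dd A x y] by blast

lemma KG_inj_rr: "A \<in> KG M mult \<Longrightarrow> x \<in> A \<Longrightarrow> y \<in> A \<Longrightarrow> rr x = rr y \<Longrightarrow> x = y"
  using KG_iff inj_onD[of rr A x y] by blast

lemma gprod_mem: "z \<in> gprod M mult A B \<longleftrightarrow> (\<exists>a b. z = a \<cdot> b \<and> a \<in> A \<and> b \<in> B \<and> dd a = rr b)"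
  unfolding gprod_def by auto

lemma ginv_KG: assumes "A \<in> KG M mult" shows "ginv M mult A \<in> KG M mult"
proof -
  have AM: "A \<subseteq> M" using assms KG_iff by auto
  have "inj_on dd (iv ` A)"
  proof (rule inj_onI)
    fix x y assume xy: "x \<in> iv ` A" "y \<in> iv ` A" "dd x = dd y"
    then obtain a b where ab: "a \<in> A" "b \<in> A" "x = iv a" "y = iv b" by auto
    then have "a \<in> M" "b \<in> M" using AM by auto
    then have "rr a = rr b" using xy(3) ab by simp
    then show "x = y" using KG_inj_rr[OF assms] ab by auto
  qed
  moreover have "inj_on rr (iv ` A)"
  proof (rule inj_onI)
    fix x y assume xy: "x \<in> iv ` A" "y \<in> iv ` A" "rr x = rr y"
    then obtain a b where ab: "a \<in> A" "b \<in> A" "x = iv a" "y = iv b" by auto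
    then have "a \<in> M" "b \<in> M" using AM by auto
    then have "dd a = dd b" using xy(3) ab by simp
    then show "x = y" using KG_inj_dd[OF assms] ab by auto
  qed
  ultimately show ?thesis using AM unfolding ginv_def KG_iff by auto
qed

lemma gprod_A_invA: assumes "A \<in> KG M mult" shows "gprod M mult A (ginv M mult A) = rr ` A"
proof (intro set_eqI iffI)
  fix z assume "z \<in> gprod M mult A (ginv M mult A)"
  then obtain a b where ab: "z = a \<cdot> iv b" "a \<in> A" "b \<in> A" "dd a = dd b"
    unfolding gprod_mem ginv_def using KG_M[OF assms] by auto
  then have "a = b" using KG_inj_dd[OF assms] by blast
  then show "z \<in> rr ` A" using ab by auto
next
  fix z assume "z \<in> rr ` A"
  then obtain a where "a \<in> A" "z = a \<cdot> iv a" by auto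
  moreover have "dd a = rr (iv a)" using KG_M[OF assms \<open>a \<in> A\<close>] by simp
  ultimately show "z \<in> gprod M mult A (ginv M mult A)" unfolding gprod_mem ginv_def by blast
qed

lemma gprod_invA_A: assumes "A \<in> KG M mult" shows "gprod M mult (ginv M mult A) A = dd ` A"
proof (intro set_eqI iffI)
  fix z assume "z \<in> gprod M mult (ginv M mult A) A"
  then obtain a b where ab: "z = iv a \<cdot> b" "a \<in> A" "b \<in> A" "rr a = rr b"
    unfolding gprod_mem ginv_def using KG_M[OF assms] by auto
  then have "a = b" using KG_inj_rr[OF assms] by blast
  then show "z \<in> dd ` A" using ab by auto
next
  fix z assume "z \<in> dd ` A"
  then obtain a where "a \<in> A" "z = iv a \<cdot> a" by auto
  moreover have "dd (iv a) = rr a" using KG_M[OF assms \<open>a \<in> A\<close>] by simp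
  ultimately show "z \<in> gprod M mult (ginv M mult A) A" unfolding gprod_mem ginv_def by blast
qed

lemma gprod_rr_A: assumes "A \<in> KG M mult" shows "gprod M mult (rr ` A) A = A"
proof (intro set_eqI iffI)
  fix z assume "z \<in> gprod M mult (rr ` A) A"
  then obtain a b where ab: "z = rr a \<cdot> b" "a \<in> A" "b \<in> A" "dd (rr a) = rr b"
    unfolding gprod_mem by auto
  have aM: "a \<in> M" "b \<in> M" using ab KG_M[OF assms] by auto
  have "dd (rr a) = rr a" using idem_dd[of "rr a"] aM by simp
  then have "rr a = rr b" using ab by simp
  then have "a = b" using KG_inj_rr[OF assms] ab by blast
  then show "z \<in> A" using ab aM by simp
next
  fix z assume z: "z \<in> A"
  have zM: "z \<in> M" using z KG_M[OF assms] by auto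
  have "dd (rr z) = rr z" using idem_dd[of "rr z"] zM by simp
  moreover have "z = rr z \<cdot> z" using zM by simp
  ultimately show "z \<in> gprod M mult (rr ` A) A" unfolding gprod_mem using z by blast
qed

lemma gprod_dd_invA: assumes "A \<in> KG M mult" shows "gprod M mult (dd ` A) (ginv M mult A) = ginv M mult A"
proof (intro set_eqI iffI)
  fix z assume "z \<in> gprod M mult (dd ` A) (ginv M mult A)"
  then obtain a b where ab: "z = dd a \<cdot> iv b" "a \<in> A" "b \<in> A" "dd (dd a) = rr (iv b)"
    unfolding gprod_mem ginv_def by auto
  have aM: "a \<in> M" "b \<in> M" using ab KG_M[OF assms] by auto
  have "dd (dd a) = dd a" using idem_dd[of "dd a"] aM by simp
  then have "dd a = dd b" using ab aM by simp
  then have "a = b" using KG_inj_dd[OF assms] ab by blast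
  then show "z \<in> ginv M mult A" using ab aM unfolding ginv_def by simp
next
  fix z assume z: "z \<in> ginv M mult A"
  then obtain a where a: "a \<in> A" "z = iv a" unfolding ginv_def by auto
  have aM: "a \<in> M" using a KG_M[OF assms] by auto
  have "dd (dd a) = rr (iv a)" using idem_dd[of "dd a"] aM by simp
  moreover have "z = dd a \<cdot> iv a" using aM a by simp
  ultimately show "z \<in> gprod M mult (dd ` A) (ginv M mult A)" unfolding gprod_mem ginv_def using a by blast
qed

lemma inv_elt: assumes yM: "y \<in> M" and aM: "a \<in> M" and yay: "y \<cdot> (a \<cdot> y) = y"
  and c1: "dd y = rr a" and c2: "dd a = rr y"
  shows "y = iv a"
proof -
  have ya_idem: "idem (y \<cdot> a)"
  proof -
    have "(y \<cdot> a) \<cdot> (y \<cdot> a) = (y \<cdot> (a \<cdot> y)) \<cdot> a" using yM aM by simp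
    also have "\<dots> = y \<cdot> a" using yay by simp
    finally show ?thesis using yM aM unfolding idem_def by simp
  qed
  have ay_idem: "idem (a \<cdot> y)"
  proof -
    have "(a \<cdot> y) \<cdot> (a \<cdot> y) = a \<cdot> (y \<cdot> (a \<cdot> y))" using yM aM by simp
    also have "\<dots> = a \<cdot> y" using yay by simp
    finally show ?thesis using yM aM unfolding idem_def by simp
  qed
  have "a \<cdot> y = iv (a \<cdot> y) \<cdot> (a \<cdot> y)" using idem_dd[OF ay_idem] by simp
  also have "\<dots> = iv y \<cdot> y" by (rule dd_prod) (use yM aM c2 in auto)
  finally have ay: "a \<cdot> y = iv y \<cdot> y" .
  have "iv a = (iv a \<cdot> a) \<cdot> iv a" using aM by simp
  also have "\<dots> = (y \<cdot> iv y) \<cdot> iv a" using c2 by simp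
  also have "\<dots> = y \<cdot> iv (a \<cdot> y)" using yM aM by (simp add: inv_mult)
  also have "\<dots> = y \<cdot> iv (iv y \<cdot> y)" using ay by simp
  also have "\<dots> = y" using yM by (simp add: inv_mult)
  finally show ?thesis by simp
qed

lemma tri_elt:
  assumes X: "X \<in> KG M mult" and ZM: "Z \<subseteq> M" and t: "t \<in> X" "t \<in> gprod M mult (gprod M mult X Z) X"
  shows "\<exists>z\<in>Z. t \<cdot> (z \<cdot> t) = t \<and> dd t = rr z \<and> dd z = rr t"
proof -
  obtain p x2 where p: "t = p \<cdot> x2" "p \<in> gprod M mult X Z" "x2 \<in> X" "dd p = rr x2"
    using t(2) unfolding gprod_mem by blast
  obtain x1 z where q: "p = x1 \<cdot> z" "x1 \<in> X" "z \<in> Z" "dd x1 = rr z"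
    using p(2) unfolding gprod_mem by blast
  have M: "x1 \<in> M" "x2 \<in> M" "z \<in> M" "t \<in> M" using q p X ZM KG_M t by auto
  have pM: "p \<in> M" using q M by simp
  have dp: "dd p = dd z" unfolding q(1) by (rule dd_prod) (use M q in auto)
  have rp: "rr p = rr x1" unfolding q(1) by (rule rr_prod) (use M q in auto)
  have "dd t = dd x2" unfolding p(1) by (rule dd_prod) (use M pM p in auto)
  then have t2: "t = x2" using KG_inj_dd[OF X t(1) p(3)] by simp
  have "rr t = rr p" unfolding p(1) by (rule rr_prod) (use M pM p in auto)
  then have t1: "t = x1" using KG_inj_rr[OF X t(1) q(2)] rp by simp
  have "t \<cdot> (z \<cdot> t) = t" using p(1) q(1) t1 t2 M by simp
  moreover have "dd t = rr z" using q(4) t1 by simp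
  moreover have "dd z = rr t" using p(4) dp t2 by simp
  ultimately show ?thesis using q(3) by blast
qed

lemma invm_KG: assumes A: "A \<in> KG M mult" shows "invm (KG M mult) (gprod M mult) A = ginv M mult A"
  unfolding invm_def
proof (rule the_equality)
  show "ginv M mult A \<in> KG M mult \<and> A = gprod M mult (gprod M mult A (ginv M mult A)) A \<and>
    ginv M mult A = gprod M mult (gprod M mult (ginv M mult A) A) (ginv M mult A)"
    using ginv_KG[OF A] gprod_A_invA[OF A] gprod_rr_A[OF A] gprod_invA_A[OF A] gprod_dd_invA[OF A]
    by simp
next
  fix Y assume Y: "Y \<in> KG M mult \<and> A = gprod M mult (gprod M mult A Y) A \<and> Y = gprod M mult (gprod M mult Y A) Y"
  have AM: "A \<subseteq> M" "Y \<subseteq> M" using A Y KG_iff by auto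
  show "Y = ginv M mult A"
  proof (intro set_eqI iffI)
    fix y assume y: "y \<in> Y"
    then have "y \<in> gprod M mult (gprod M mult Y A) Y" using Y by simp
    then obtain a where a: "a \<in> A" "y \<cdot> (a \<cdot> y) = y" "dd y = rr a" "dd a = rr y"
      using tri_elt[of Y A y] Y AM y by blast
    then have "y = iv a" using inv_elt[of y a] AM y by auto
    then show "y \<in> ginv M mult A" using a unfolding ginv_def by simp
  next
    fix y assume "y \<in> ginv M mult A"
    then obtain a where a: "a \<in> A" "y = iv a" unfolding ginv_def by auto
    then have "a \<in> gprod M mult (gprod M mult A Y) A" using Y by simp
    then obtain z where z: "z \<in> Y" "a \<cdot> (z \<cdot> a) = a" "dd a = rr z" "dd z = rr a"
      using tri_elt[of A Y a] A AM a by blast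
    then have "a = iv z" using inv_elt[of a z] AM a by auto
    then show "y \<in> Y" using a z AM by auto
  qed
qed

lemma gprod_dd: assumes Y: "Y \<in> KG M mult" and X: "X \<subseteq> M"
  shows "gprod M mult Y (dd ` X) = {y \<in> Y. dd y \<in> dd ` X}"
proof (intro set_eqI iffI)
  fix z assume "z \<in> gprod M mult Y (dd ` X)"
  then obtain y x where yx: "z = y \<cdot> dd x" "y \<in> Y" "x \<in> X" "dd y = rr (dd x)"
    unfolding gprod_mem by blast
  have M: "y \<in> M" "x \<in> M" using yx X Y KG_M by auto
  have "rr (dd x) = dd x" using idem_rr[of "dd x"] M by simp
  then have e: "dd y = dd x" using yx by simp
  have "z = y \<cdot> dd y" using yx(1) e by simp
  then have "z = y" using M by simp
  then show "z \<in> {y \<in> Y. dd y \<in> dd ` X}" using yx e by auto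
next
  fix z assume "z \<in> {y \<in> Y. dd y \<in> dd ` X}"
  then obtain x where x: "z \<in> Y" "x \<in> X" "dd z = dd x" by auto
  have M: "z \<in> M" "x \<in> M" using x X Y KG_M by auto
  have "rr (dd x) = dd x" using idem_rr[of "dd x"] M by simp
  then have "dd z = rr (dd x)" using x by simp
  moreover have "z = z \<cdot> dd x" using M x(3)[symmetric] by simp
  ultimately show "z \<in> gprod M mult Y (dd ` X)" unfolding gprod_mem using x by blast
qed

lemma le_KG: assumes X: "X \<in> KG M mult" and Y: "Y \<in> KG M mult"
  shows "nleq (KG M mult) (gprod M mult) X Y \<longleftrightarrow> X \<subseteq> Y"
proof -
  have XM: "X \<subseteq> M" using X KG_iff by auto
  have "nleq (KG M mult) (gprod M mult) X Y \<longleftrightarrow> X = {y \<in> Y. dd y \<in> dd ` X}"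
    unfolding nleq_def invm_KG[OF X] gprod_invA_A[OF X] gprod_dd[OF Y XM] ..
  also have "\<dots> \<longleftrightarrow> X \<subseteq> Y"
  proof
    assume "X = {y \<in> Y. dd y \<in> dd ` X}" then show "X \<subseteq> Y" by blast
  next
    assume s: "X \<subseteq> Y"
    show "X = {y \<in> Y. dd y \<in> dd ` X}"
    proof (intro set_eqI iffI)
      fix y assume "y \<in> X" then show "y \<in> {y \<in> Y. dd y \<in> dd ` X}" using s by auto
    next
      fix y assume "y \<in> {y \<in> Y. dd y \<in> dd ` X}"
      then obtain x where x: "y \<in> Y" "x \<in> X" "dd y = dd x" by auto
      then have "y = x" using KG_inj_dd[OF Y] s by blast
      then show "y \<in> X" using x by simp
    qed
  qed
  finally show ?thesis .
qed

lemma gprod_idems: assumes "X \<subseteq> {e. idem e}" "Z \<subseteq> {e. idem e}" shows "gprod M mult X Z = X \<inter> Z"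
proof (intro set_eqI iffI)
  fix z assume "z \<in> gprod M mult X Z"
  then obtain x y where xy: "z = x \<cdot> y" "x \<in> X" "y \<in> Z" "dd x = rr y" unfolding gprod_mem by blast
  have "x = y" using xy assms idem_dd[of x] idem_rr[of y] by auto
  then show "z \<in> X \<inter> Z" using xy assms idem_sq by auto
next
  fix z assume z: "z \<in> X \<inter> Z"
  then have "idem z" using assms by auto
  then have "z = z \<cdot> z" "dd z = rr z" using idem_sq idem_dd idem_rr by auto
  then show "z \<in> gprod M mult X Z" unfolding gprod_mem using z by blast
qed

lemma idems_KG: assumes X: "X \<in> KG M mult"
  shows "X \<in> idems (KG M mult) (gprod M mult) \<longleftrightarrow> X \<subseteq> {e. idem e}"
proof
  assume "X \<in> idems (KG M mult) (gprod M mult)"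
  then have XX: "gprod M mult X X = X" unfolding idems_def by auto
  show "X \<subseteq> {e. idem e}"
  proof
    fix x assume x: "x \<in> X"
    then have "x \<in> gprod M mult X X" using XX by simp
    then obtain a b where ab: "x = a \<cdot> b" "a \<in> X" "b \<in> X" "dd a = rr b"
      unfolding gprod_mem by blast
    have M: "a \<in> M" "b \<in> M" "x \<in> M" using ab x X KG_M by auto
    have "dd x = dd b" unfolding ab(1) by (rule dd_prod) (use M ab in auto)
    then have "x = b" using KG_inj_dd[OF X x ab(3)] by simp
    have "rr x = rr a" unfolding ab(1) by (rule rr_prod) (use M ab in auto)
    then have "x = a" using KG_inj_rr[OF X x ab(2)] by simp
    have "x \<cdot> x = x" using ab \<open>x = a\<close> \<open>x = b\<close> by simp
    then show "x \<in> {e. idem e}" using M unfolding idem_def by simp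
  qed
next
  assume "X \<subseteq> {e. idem e}"
  then show "X \<in> idems (KG M mult) (gprod M mult)"
    using gprod_idems X unfolding idems_def by auto
qed

lemma compatible_KG: assumes A: "A \<in> KG M mult" and B: "B \<in> KG M mult"
  shows "compatible (KG M mult) (gprod M mult) A B \<longleftrightarrow>
    gprod M mult (ginv M mult A) B \<subseteq> {e. idem e} \<and> gprod M mult A (ginv M mult B) \<subseteq> {e. idem e}"
  unfolding compatible_def invm_KG[OF A] invm_KG[OF B]
  using idems_KG KG_prod ginv_KG A B by auto

lemma union_KG_compat: assumes A: "A \<in> KG M mult" and B: "B \<in> KG M mult"
  shows "A \<union> B \<in> KG M mult \<longleftrightarrow> compatible (KG M mult) (gprod M mult) A B"
proof
  assume U: "A \<union> B \<in> KG M mult"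
  have "gprod M mult (ginv M mult (A \<union> B)) (A \<union> B) \<subseteq> idems M mult"
     "gprod M mult (A \<union> B) (ginv M mult (A \<union> B)) \<subseteq> idems M mult"
    using U unfolding KG_def local_bisection_def by auto
  moreover have "gprod M mult (ginv M mult A) B \<subseteq> gprod M mult (ginv M mult (A \<union> B)) (A \<union> B)"
    unfolding gprod_def ginv_def by blast
  moreover have "gprod M mult A (ginv M mult B) \<subseteq> gprod M mult (A \<union> B) (ginv M mult (A \<union> B))"
    unfolding gprod_def ginv_def by blast
  ultimately show "compatible (KG M mult) (gprod M mult) A B"
    unfolding compatible_KG[OF A B] idems_eq by blast
next
  assume "compatible (KG M mult) (gprod M mult) A B"
  then have c: "gprod M mult (ginv M mult A) B \<subseteq> {e. idem e}" "gprod M mult A (ginv M mult B) \<subseteq> {e. idem e}"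
    using compatible_KG[OF A B] by auto
  have AM: "A \<subseteq> M" "B \<subseteq> M" using A B KG_iff by auto
  have d: "a = b" if "a \<in> A" "b \<in> B" "dd a = dd b" for a b
  proof -
    have "iv b \<in> ginv M mult B" "dd a = rr (iv b)" using that AM unfolding ginv_def by auto
    then have "a \<cdot> iv b \<in> gprod M mult A (ginv M mult B)" unfolding gprod_mem using that by blast
    then have "idem (a \<cdot> iv b)" using c by auto
    then show ?thesis using grpd_L[of a b] that AM by auto
  qed
  have r: "a = b" if "a \<in> A" "b \<in> B" "rr a = rr b" for a b
  proof -
    have "iv a \<in> ginv M mult A" "dd (iv a) = rr b" using that AM unfolding ginv_def by auto
    then have "iv a \<cdot> b \<in> gprod M mult (ginv M mult A) B" unfolding gprod_mem using that by blast
    then have "idem (iv a \<cdot> b)" using c by auto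
    then show ?thesis using grpd_L'[of a b] that AM by auto
  qed
  have "inj_on dd (A \<union> B)"
  proof (rule inj_onI)
    fix x y assume "x \<in> A \<union> B" "y \<in> A \<union> B" "dd x = dd y"
    then show "x = y" using d KG_inj_dd[OF A] KG_inj_dd[OF B] by (metis Un_iff)
  qed
  moreover have "inj_on rr (A \<union> B)"
  proof (rule inj_onI)
    fix x y assume "x \<in> A \<union> B" "y \<in> A \<union> B" "rr x = rr y"
    then show "x = y" using r KG_inj_rr[OF A] KG_inj_rr[OF B] by (metis Un_iff)
  qed
  ultimately show "A \<union> B \<in> KG M mult" using AM KG_iff by auto
qed

lemma join_KG: assumes A: "A \<in> KG M mult" and B: "B \<in> KG M mult" and U: "A \<union> B \<in> KG M mult"
  shows "is_join (KG M mult) (gprod M mult) {A, B} (A \<union> B)"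
  unfolding is_join_def using le_KG A B U by auto

lemma join_KG_eq: assumes A: "A \<in> KG M mult" and B: "B \<in> KG M mult" and U: "A \<union> B \<in> KG M mult"
  and j: "is_join (KG M mult) (gprod M mult) {A, B} j"
  shows "j = A \<union> B"
proof -
  have jK: "j \<in> KG M mult" using j unfolding is_join_def by auto
  have "A \<subseteq> j" "B \<subseteq> j" using j le_KG A B jK unfolding is_join_def by auto
  moreover have "j \<subseteq> A \<union> B" using j le_KG A B jK U unfolding is_join_def by auto
  ultimately show ?thesis by auto
qed

end



context invmon begin

lemma pc_left_idems: assumes "X \<subseteq> {e. idem e}" "s \<in> M" shows "pc ((\<lambda>y. s \<cdot> y) ` X)"
  unfolding pc_def compatible_def idems_eq
proof (intro ballI conjI)
  fix a b assume ab: "a \<in> (\<lambda>y. s \<cdot> y) ` X" "b \<in> (\<lambda>y. s \<cdot> y) ` X"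
  then obtain p q where pq: "a = s \<cdot> p" "b = s \<cdot> q" "idem p" "idem q" using assms by auto
  have M: "p \<in> M" "q \<in> M" using pq idem_M by auto
  have "iv a \<cdot> b = p \<cdot> ((iv s \<cdot> s) \<cdot> q)" using pq M assms by (simp add: inv_mult idem_inv)
  moreover have "idem (p \<cdot> ((iv s \<cdot> s) \<cdot> q))" using idem_prod pq assms by simp
  ultimately show "iv a \<cdot> b \<in> {e. idem e}" by simp
  have "a \<cdot> iv b = s \<cdot> (p \<cdot> q) \<cdot> iv s" using pq M assms by (simp add: inv_mult idem_inv)
  moreover have "idem (s \<cdot> (p \<cdot> q) \<cdot> iv s)" using conj_idem idem_prod pq assms by simp
  ultimately show "a \<cdot> iv b \<in> {e. idem e}" by simp
qed

lemma compatible_self: "x \<in> M \<Longrightarrow> compatible M mult x x"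
  unfolding compatible_def idems_eq by simp

end

context bim begin

lemma compatible_zero: "iv a \<cdot> b = zero \<Longrightarrow> a \<cdot> iv b = zero \<Longrightarrow> compatible M mult a b"
  unfolding compatible_def idems_eq by simp

lemma join_exI: assumes "finite X" "X \<subseteq> M" "pc X"
  shows "is_join M mult X (THE j. is_join M mult X j)"
proof -
  obtain j where j: "is_join M mult X j" using join_ex assms by blast
  show ?thesis by (rule theI[of _ j]) (use j join_unique in blast)+
qed

end

locale ctx = S: invmon S m u + T: bim T n v w for S m u T n v w +
  fixes \<alpha>
  assumes finS: "finite S" and hom: "monoid_hom S m u T n v \<alpha>"
begin

lemma al_M[simp]: "x \<in> S \<Longrightarrow> \<alpha> x \<in> T" using hom unfolding monoid_hom_def by auto
lemma al_mult: "x \<in> S \<Longrightarrow> y \<in> S \<Longrightarrow> \<alpha> (m x y) = n (\<alpha> x) (\<alpha> y)"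
  using hom unfolding monoid_hom_def by auto
lemma al_u: "\<alpha> u = v" using hom unfolding monoid_hom_def by auto

lemma al_inv: assumes x: "x \<in> S" shows "\<alpha> (S.iv x) = T.iv (\<alpha> x)"
proof -
  have "n (\<alpha> x) (n (\<alpha> (S.iv x)) (\<alpha> x)) = \<alpha> x" using x by (simp add: al_mult[symmetric])
  moreover have "n (\<alpha> (S.iv x)) (n (\<alpha> x) (\<alpha> (S.iv x))) = \<alpha> (S.iv x)" using x by (simp add: al_mult[symmetric])
  ultimately show ?thesis using x by (intro T.inv_unique[symmetric]) auto
qed

lemma al_idem: "S.idem e \<Longrightarrow> T.idem (\<alpha> e)"
  unfolding S.idem_def T.idem_def by (metis al_M al_mult)

lemma al_le: assumes "nleq S m x y" "x \<in> S" "y \<in> S" shows "nleq T n (\<alpha> x) (\<alpha> y)"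
proof -
  obtain e where e: "S.idem e" "x = m y e" using S.le_right assms by blast
  then have "\<alpha> x = n (\<alpha> y) (\<alpha> e)" using al_mult assms S.idem_M by simp
  moreover have "T.idem (\<alpha> e)" using al_idem e by simp
  moreover have "\<alpha> x \<in> T" "\<alpha> y \<in> T" using assms by auto
  ultimately show ?thesis using T.le_right by blast
qed

definition Lt where "Lt e = {f. S.idem f \<and> nleq S m f e \<and> f \<noteq> e}"
definition Le where "Le e = {f. S.idem f \<and> nleq S m f e}"

lemma Lt_S: "Lt e \<subseteq> S" unfolding Lt_def using S.idem_M by auto
lemma Le_S: "Le e \<subseteq> S" unfolding Le_def using S.idem_M by auto
lemma finite_Lt: "finite (Lt e)" using Lt_S finS finite_subset by blast
lemma finite_Le: "finite (Le e)" using Le_S finS finite_subset by blast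

lemma Le_insert: "S.idem e \<Longrightarrow> Le e = insert e (Lt e)"
  unfolding Le_def Lt_def using S.idem_M by auto

lemma Le_Lt_subset: assumes e: "S.idem e" and f: "f \<in> Lt e" shows "Le f \<subset> Le e"
proof -
  have f1: "S.idem f" "nleq S m f e" "f \<noteq> e" using f unfolding Lt_def by auto
  have "Le f \<subseteq> Le e" unfolding Le_def using f1 e S.le_trans S.idem_M by blast
  moreover have "e \<notin> Le f" unfolding Le_def using f1 e S.le_antisym S.idem_M by blast
  moreover have "e \<in> Le e" unfolding Le_def using e S.idem_M by auto
  ultimately show ?thesis by blast
qed

lemma Le_sub_Lt: assumes e: "S.idem e" and f: "f \<in> Lt e" shows "Le f \<subseteq> Lt e"
proof
  fix g assume g: "g \<in> Le f"
  have f1: "S.idem f" "nleq S m f e" "f \<noteq> e" using f unfolding Lt_def by auto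
  have g1: "S.idem g" "nleq S m g f" using g unfolding Le_def by auto
  have "nleq S m g e" using S.le_trans[of g f e] f1 g1 e S.idem_M by blast
  moreover have "g \<noteq> e" using S.le_antisym[of e f] f1 g1 e S.idem_M by blast
  ultimately show "g \<in> Lt e" using g1 unfolding Lt_def by auto
qed

lemma idem_induct[consumes 1, case_names step]:
  assumes "S.idem e" and step: "\<And>e. S.idem e \<Longrightarrow> (\<And>f. f \<in> Lt e \<Longrightarrow> P f) \<Longrightarrow> P e"
  shows "P e"
  using assms(1)
proof (induct e rule: measure_induct_rule[of "\<lambda>e. card (Le e)"])
  case (less e)
  show ?case
  proof (rule step[OF less.prems])
    fix f assume f: "f \<in> Lt e"
    then have "card (Le f) < card (Le e)" using Le_Lt_subset[OF less.prems f] finite_Le psubset_card_mono by blast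
    moreover have "S.idem f" using f unfolding Lt_def by auto
    ultimately show "P f" using less.hyps by blast
  qed
qed

lemma Lt_union: assumes e: "S.idem e" shows "Lt e = (\<Union>f\<in>Lt e. Le f)"
proof (intro set_eqI iffI)
  fix g assume "g \<in> Lt e"
  then show "g \<in> (\<Union>f\<in>Lt e. Le f)" unfolding Le_def Lt_def using S.idem_M by auto
next
  fix g assume "g \<in> (\<Union>f\<in>Lt e. Le f)"
  then obtain f where f: "f \<in> Lt e" "g \<in> Le f" by auto
  then show "g \<in> Lt e" using Le_sub_Lt[OF e f(1)] by blast
qed

lemma conj_lt:
  assumes x: "x \<in> S" and g: "S.idem g" "nleq S m g (m x (S.iv x))" "g \<noteq> m x (S.iv x)"
  shows "S.idem (m (S.iv x) (m g x)) \<and> nleq S m (m (S.iv x) (m g x)) (m (S.iv x) x)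
     \<and> m (S.iv x) (m g x) \<noteq> m (S.iv x) x \<and> m x (m (m (S.iv x) (m g x)) (S.iv x)) = g"
proof -
  have gM: "g \<in> S" using g S.idem_M by auto
  have gr: "g = m (m x (S.iv x)) g" using g S.le_idem_iff x by simp
  have gr': "m x (m (S.iv x) g) = g" using gr x gM by simp
  have gr'': "m g (m x (S.iv x)) = g" using g S.le_idem_iff' x by simp
  have i: "S.idem (m (S.iv x) (m g x))" using S.conj_idem[of g "S.iv x"] g x gM by simp
  have bkw: "m x (m (m (S.iv x) (m g x)) (S.iv x)) = g"
  proof -
    have "m x (m (m (S.iv x) (m g x)) (S.iv x)) = m (m x (m (S.iv x) g)) (m x (S.iv x))" using x gM by simp
    also have "\<dots> = g" using gr' gr'' by simp
    finally show ?thesis .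
  qed
  have le: "nleq S m (m (S.iv x) (m g x)) (m (S.iv x) x)"
  proof -
    have "m (m (S.iv x) (m g x)) (m (S.iv x) x) = m (S.iv x) (m (m g (m x (S.iv x))) x)" using x gM by simp
    also have "\<dots> = m (S.iv x) (m g x)" using gr'' by simp
    finally show ?thesis using S.le_idem_iff' i x by simp
  qed
  have ne: "m (S.iv x) (m g x) \<noteq> m (S.iv x) x"
  proof
    assume "m (S.iv x) (m g x) = m (S.iv x) x"
    then have "m x (m (m (S.iv x) (m g x)) (S.iv x)) = m x (m (m (S.iv x) x) (S.iv x))" by simp
    then have "g = m x (S.iv x)" using bkw x by simp
    then show False using g by simp
  qed
  show ?thesis using i le ne bkw by blast
qed

lemma Lt_conj: assumes x: "x \<in> S"
  shows "Lt (m x (S.iv x)) = (\<lambda>f. m x (m f (S.iv x))) ` Lt (m (S.iv x) x)"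
proof (intro set_eqI iffI)
  fix g assume "g \<in> Lt (m x (S.iv x))"
  then have g: "S.idem g" "nleq S m g (m x (S.iv x))" "g \<noteq> m x (S.iv x)" unfolding Lt_def by auto
  have c: "S.idem (m (S.iv x) (m g x)) \<and> nleq S m (m (S.iv x) (m g x)) (m (S.iv x) x)
     \<and> m (S.iv x) (m g x) \<noteq> m (S.iv x) x \<and> m x (m (m (S.iv x) (m g x)) (S.iv x)) = g"
    using conj_lt[OF x g] .
  then have "m (S.iv x) (m g x) \<in> Lt (m (S.iv x) x)" unfolding Lt_def by auto
  moreover have "g = m x (m (m (S.iv x) (m g x)) (S.iv x))" using c by simp
  ultimately show "g \<in> (\<lambda>f. m x (m f (S.iv x))) ` Lt (m (S.iv x) x)" by blast
next
  fix g assume "g \<in> (\<lambda>f. m x (m f (S.iv x))) ` Lt (m (S.iv x) x)"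
  then obtain f where f: "f \<in> Lt (m (S.iv x) x)" "g = m x (m f (S.iv x))" by auto
  have f': "S.idem f" "nleq S m f (m (S.iv x) (S.iv (S.iv x)))" "f \<noteq> m (S.iv x) (S.iv (S.iv x))"
    using f x unfolding Lt_def by auto
  have ix: "S.iv x \<in> S" using x by simp
  have "S.idem (m (S.iv (S.iv x)) (m f (S.iv x))) \<and> nleq S m (m (S.iv (S.iv x)) (m f (S.iv x))) (m (S.iv (S.iv x)) (S.iv x))
     \<and> m (S.iv (S.iv x)) (m f (S.iv x)) \<noteq> m (S.iv (S.iv x)) (S.iv x)"
    using conj_lt[OF ix f'] by blast
  then show "g \<in> Lt (m x (S.iv x))" unfolding Lt_def using f x by simp
qed

end



context bim begin

lemma conj_join:
  assumes j: "is_join M mult X j" and X: "finite X" "X \<subseteq> {e. idem e}" and s: "s \<in> M"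
  shows "is_join M mult ((\<lambda>y. s \<cdot> (y \<cdot> iv s)) ` X) (s \<cdot> (j \<cdot> iv s))"
proof -
  have XM: "X \<subseteq> M" using X idem_M by auto
  have 1: "is_join M mult ((\<lambda>y. s \<cdot> y) ` X) (s \<cdot> j)"
    using distrib(1)[OF X(1) XM pc_idem[OF X(2)] j s] .
  have 2: "is_join M mult ((\<lambda>y. y \<cdot> iv s) ` ((\<lambda>y. s \<cdot> y) ` X)) (s \<cdot> j \<cdot> iv s)"
    by (rule distrib(2)[OF _ _ pc_left_idems[OF X(2) s] 1]) (use X XM s in auto)
  have "(\<lambda>y. y \<cdot> iv s) ` ((\<lambda>y. s \<cdot> y) ` X) = (\<lambda>y. s \<cdot> (y \<cdot> iv s)) ` X"
    unfolding image_image using XM s by (intro image_cong) auto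
  moreover have "s \<cdot> j \<cdot> iv s = s \<cdot> (j \<cdot> iv s)" using s join_M[OF j] by simp
  ultimately show ?thesis using 2 by simp
qed

end

context ctx begin

definition Jlt where "Jlt e = (THE j. is_join T n (\<alpha> ` Lt e) j)"

lemma al_Lt_idem: "\<alpha> ` Lt e \<subseteq> {x. T.idem x}"
  using al_idem unfolding Lt_def by auto

lemma Jlt_join: "is_join T n (\<alpha> ` Lt e) (Jlt e)"
  unfolding Jlt_def
  by (rule T.join_exI) (use finite_Lt al_Lt_idem T.pc_idem T.idem_M Lt_S[THEN subsetD] in auto)

lemma Jlt_idem: "T.idem (Jlt e)"
  using T.join_idem[OF Jlt_join al_Lt_idem] .

lemma Jlt_le: assumes e: "S.idem e" shows "nleq T n (Jlt e) (\<alpha> e)"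
proof (rule T.join_least[OF Jlt_join])
  show "\<alpha> e \<in> T" using e S.idem_M by simp
  fix y assume "y \<in> \<alpha> ` Lt e"
  then obtain f where f: "f \<in> Lt e" "y = \<alpha> f" by auto
  then show "nleq T n y (\<alpha> e)" using al_le[of f e] e S.idem_M unfolding Lt_def by auto
qed

lemma Jlt_absorb: assumes e: "S.idem e" shows "n (\<alpha> e) (Jlt e) = Jlt e"
  using Jlt_le[OF e] T.le_idem_iff[OF Jlt_idem al_idem[OF e]] by simp

definition cmp where "cmp q = (SOME c. T.idem c \<and> n q c = w \<and> is_join T n {q, c} v)"

lemma cmp: assumes "T.idem q" shows "T.idem (cmp q) \<and> n q (cmp q) = w \<and> is_join T n {q, cmp q} v"
  unfolding cmp_def using someI_ex[OF T.compl_ex[OF assms]] .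

definition eps where "eps e = n (\<alpha> e) (cmp (Jlt e))"

lemma cmpJ: "T.idem (cmp (Jlt e))" "n (Jlt e) (cmp (Jlt e)) = w" "is_join T n {Jlt e, cmp (Jlt e)} v"
  using cmp[OF Jlt_idem] by auto

lemma eps_idem: "S.idem e \<Longrightarrow> T.idem (eps e)"
  unfolding eps_def using T.idem_prod al_idem cmpJ by blast

lemma eps_le: assumes "S.idem e" shows "n (\<alpha> e) (eps e) = eps e"
  unfolding eps_def using assms al_idem cmpJ T.idem_M by simp

lemma eps_le': assumes "S.idem e" shows "n (eps e) (\<alpha> e) = eps e"
  using eps_le[OF assms] T.idem_comm[OF eps_idem[OF assms] al_idem[OF assms]] by simp

lemma eps_join: assumes e: "S.idem e" shows "is_join T n {Jlt e, eps e} (\<alpha> e)"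
proof -
  have ae: "\<alpha> e \<in> T" using e S.idem_M by simp
  have "is_join T n ((\<lambda>x. n (\<alpha> e) x) ` {Jlt e, cmp (Jlt e)}) (n (\<alpha> e) v)"
    by (rule T.distrib(1)[OF _ _ _ cmpJ(3) ae])
       (use Jlt_idem cmpJ T.idem_M T.pc_idem[of "{Jlt e, cmp (Jlt e)}"] in auto)
  then show ?thesis using Jlt_absorb[OF e] ae unfolding eps_def by simp
qed

lemma eps_Jlt: assumes e: "S.idem e" shows "n (eps e) (Jlt e) = w"
proof -
  have M: "\<alpha> e \<in> T" "cmp (Jlt e) \<in> T" "Jlt e \<in> T" using e S.idem_M cmpJ Jlt_idem T.idem_M by auto
  have "n (eps e) (Jlt e) = n (\<alpha> e) (n (cmp (Jlt e)) (Jlt e))" unfolding eps_def using M by simp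
  also have "\<dots> = n (\<alpha> e) (n (Jlt e) (cmp (Jlt e)))" using T.idem_comm[OF cmpJ(1) Jlt_idem] by simp
  also have "\<dots> = w" using cmpJ(2) M by simp
  finally show ?thesis .
qed

lemma kill: assumes g: "g \<in> Lt e" shows "n (\<alpha> g) (cmp (Jlt e)) = w"
proof -
  have gi: "S.idem g" using g unfolding Lt_def by auto
  have ag: "T.idem (\<alpha> g)" using al_idem gi by simp
  have "nleq T n (\<alpha> g) (Jlt e)" using T.join_ub[OF Jlt_join] g by simp
  then have "\<alpha> g = n (\<alpha> g) (Jlt e)" using T.le_idem_iff'[OF ag Jlt_idem] by simp
  then have "n (\<alpha> g) (cmp (Jlt e)) = n (n (\<alpha> g) (Jlt e)) (cmp (Jlt e))" by simp
  also have "\<dots> = n (\<alpha> g) (n (Jlt e) (cmp (Jlt e)))" using ag Jlt_idem cmpJ T.idem_M by simp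
  also have "\<dots> = w" using cmpJ(2) ag T.idem_M by simp
  finally show ?thesis .
qed

lemma eps_orth: assumes e: "S.idem e" and f: "S.idem f" and ne: "e \<noteq> f"
  shows "n (eps e) (eps f) = w"
proof -
  let ?ae = "\<alpha> e" and ?af = "\<alpha> f" and ?ce = "cmp (Jlt e)" and ?cf = "cmp (Jlt f)"
  have I: "T.idem ?ae" "T.idem ?af" "T.idem ?ce" "T.idem ?cf" using al_idem e f cmpJ by auto
  have M: "?ae \<in> T" "?af \<in> T" "?ce \<in> T" "?cf \<in> T" using I T.idem_M by auto
  have eM: "e \<in> S" "f \<in> S" using e f S.idem_M by auto
  show ?thesis
  proof (cases "m e f = e")
    case False
    have "m e f \<in> Lt e" unfolding Lt_def using S.idem_prod[OF e f] S.idem_prod_le1[OF e f] False by auto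
    then have "n (\<alpha> (m e f)) ?ce = w" by (rule kill)
    then have k: "n (n ?ae ?af) ?ce = w" using al_mult eM by simp
    have "n (eps e) (eps f) = n (n (n ?ae ?af) ?ce) ?cf" unfolding eps_def
      using I M by (simp add: T.idem_comm T.idem_comm_left)
    then show ?thesis using k M by simp
  next
    case True
    then have "nleq S m e f" using S.le_idem_iff'[OF e f] by simp
    then have "e \<in> Lt f" unfolding Lt_def using e ne by auto
    then have k: "n ?ae ?cf = w" using kill by simp
    have "n (eps e) (eps f) = n (n ?ce ?af) (n ?ae ?cf)" unfolding eps_def
      using I M by (simp add: T.idem_comm T.idem_comm_left)
    then show ?thesis using k M by simp
  qed
qed

end



context ctx begin

lemma eps_M: "S.idem e \<Longrightarrow> eps e \<in> T" using eps_idem T.idem_M by blast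

lemma eps_sum: assumes "S.idem e" shows "is_join T n (eps ` Le e) (\<alpha> e)"
  using assms
proof (induct e rule: idem_induct)
  case (step e)
  have U: "is_join T n (\<Union>f\<in>Lt e. eps ` Le f) (Jlt e)"
  proof (rule T.join_family[where j = \<alpha>])
    show "\<And>i. i \<in> Lt e \<Longrightarrow> is_join T n (eps ` Le i) (\<alpha> i)" using step(2) by blast
    show "is_join T n (\<alpha> ` Lt e) (Jlt e)" by (rule Jlt_join)
    show "\<And>i x. i \<in> Lt e \<Longrightarrow> x \<in> eps ` Le i \<Longrightarrow> x \<in> T" using eps_M unfolding Le_def by auto
  qed
  have L: "(\<Union>f\<in>Lt e. Le f) = Lt e" using Lt_union[OF step(1)] by (rule sym)
  have "(\<Union>f\<in>Lt e. eps ` Le f) = eps ` Lt e"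
    by (simp only: image_UN[symmetric] L)
  then have U': "is_join T n (eps ` Lt e) (Jlt e)" using U by simp
  have P: "is_join T n {eps e, Jlt e} (\<alpha> e)" using eps_join[OF step(1)] by (simp add: insert_commute)
  have "is_join T n ({eps e} \<union> eps ` Lt e) (\<alpha> e)"
    by (rule T.join_union[OF T.join_single U' P]) (use eps_M step(1) Lt_def in auto)
  then show ?case using Le_insert[OF step(1)] by simp
qed

lemma conj_eps: assumes x: "x \<in> S"
  shows "n (\<alpha> x) (eps (m (S.iv x) x)) = n (eps (m x (S.iv x))) (\<alpha> x)"
proof -
  define s where "s = \<alpha> x"
  define e where "e = m (S.iv x) x"
  define e' where "e' = m x (S.iv x)"
  have sT: "s \<in> T" using x s_def by simp
  have ei: "S.idem e" "S.idem e'" using x e_def e'_def by auto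
  have ss: "n (T.iv s) s = \<alpha> e" using x unfolding s_def e_def by (simp add: al_mult al_inv)
  have ss': "n s (T.iv s) = \<alpha> e'" using x unfolding s_def e'_def by (simp add: al_mult al_inv)
  have M: "\<alpha> e \<in> T" "\<alpha> e' \<in> T" "eps e \<in> T" "eps e' \<in> T" "Jlt e \<in> T" "Jlt e' \<in> T"
    using ei eps_M S.idem_M Jlt_idem T.idem_M by auto
  have CJ: "is_join T n ((\<lambda>y. n s (n y (T.iv s))) ` (\<alpha> ` Lt e)) (n s (n (Jlt e) (T.iv s)))"
    by (rule T.conj_join[OF Jlt_join]) (use finite_Lt al_Lt_idem sT in auto)
  have "(\<lambda>y. n s (n y (T.iv s))) ` (\<alpha> ` Lt e) = \<alpha> ` ((\<lambda>f. m x (m f (S.iv x))) ` Lt e)"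
    unfolding image_image using x Lt_S[THEN subsetD] unfolding s_def by (intro image_cong) (auto simp: al_mult al_inv)
  also have "\<dots> = \<alpha> ` Lt e'" using Lt_conj[OF x] unfolding e_def e'_def by simp
  finally have "is_join T n (\<alpha> ` Lt e') (n s (n (Jlt e) (T.iv s)))" using CJ by simp
  then have Jc: "n s (n (Jlt e) (T.iv s)) = Jlt e'" using Jlt_join T.join_unique by blast
  define r where "r = n s (n (eps e) (T.iv s))"
  have ri: "T.idem r" unfolding r_def using T.conj_idem[OF eps_idem[OF ei(1)] sT] sT M by simp
  have rq: "n r (Jlt e') = w"
  proof -
    have "n r (Jlt e') = n s (n (eps e) (n (n (T.iv s) s) (n (Jlt e) (T.iv s))))"
      unfolding r_def Jc[symmetric] using sT M by simp
    also have "\<dots> = n s (n (n (eps e) (\<alpha> e)) (n (Jlt e) (T.iv s)))" using ss sT M by simp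
    also have "\<dots> = n s (n (n (eps e) (Jlt e)) (T.iv s))" using eps_le'[OF ei(1)] sT M by simp
    also have "\<dots> = w" using eps_Jlt[OF ei(1)] sT by simp
    finally show ?thesis .
  qed
  have rj: "is_join T n {r, Jlt e'} (\<alpha> e')"
  proof -
    have "is_join T n ((\<lambda>y. n s (n y (T.iv s))) ` {Jlt e, eps e}) (n s (n (\<alpha> e) (T.iv s)))"
      by (rule T.conj_join[OF eps_join[OF ei(1)]]) (use Jlt_idem eps_idem ei sT in auto)
    moreover have "n s (n (\<alpha> e) (T.iv s)) = \<alpha> e'"
    proof -
      have "n s (n (\<alpha> e) (T.iv s)) = n s (n (n (T.iv s) s) (T.iv s))" using ss by simp
      also have "\<dots> = n s (T.iv s)" using sT by simp
      finally show ?thesis using ss' by simp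
    qed
    ultimately show ?thesis using Jc unfolding r_def by (simp add: insert_commute)
  qed
  have r'j: "is_join T n {eps e', Jlt e'} (\<alpha> e')" using eps_join[OF ei(2)] by (simp add: insert_commute)
  have req: "r = eps e'"
    by (rule T.rel_compl_unique[OF ri eps_idem[OF ei(2)] Jlt_idem rq eps_Jlt[OF ei(2)] rj r'j])
  have "n (eps e') s = n (n s (n (eps e) (T.iv s))) s" using req unfolding r_def by simp
  also have "\<dots> = n s (n (eps e) (n (T.iv s) s))" using sT M by simp
  also have "\<dots> = n s (eps e)" using ss eps_le'[OF ei(1)] by simp
  finally show ?thesis unfolding s_def e_def e'_def by simp
qed

end



context ctx begin

definition g0 where "g0 x = n (\<alpha> x) (eps (m (S.iv x) x))"
definition Gam where "Gam A = (THE j. is_join T n (g0 ` A) j)"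

lemma g0_M: "x \<in> S \<Longrightarrow> g0 x \<in> T"
  unfolding g0_def using eps_M by simp

lemma g0_alt: "x \<in> S \<Longrightarrow> g0 x = n (eps (m x (S.iv x))) (\<alpha> x)"
  unfolding g0_def using conj_eps by simp

lemma g0_mult:
  assumes a: "a \<in> S" and b: "b \<in> S"
  shows "m (S.iv a) a = m b (S.iv b) \<Longrightarrow> n (g0 a) (g0 b) = g0 (m a b)"
    and "m (S.iv a) a \<noteq> m b (S.iv b) \<Longrightarrow> n (g0 a) (g0 b) = w"
proof -
  have I: "S.idem (m (S.iv a) a)" "S.idem (m b (S.iv b))" "S.idem (m (S.iv b) b)" using a b by auto
  have M: "eps (m (S.iv a) a) \<in> T" "eps (m b (S.iv b)) \<in> T" "eps (m (S.iv b) b) \<in> T" "\<alpha> a \<in> T" "\<alpha> b \<in> T"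
    using I eps_M a b by auto
  have P: "n (g0 a) (g0 b) = n (\<alpha> a) (n (n (eps (m (S.iv a) a)) (eps (m b (S.iv b)))) (\<alpha> b))"
    unfolding g0_def[of a] g0_alt[OF b] using M by simp
  {
    assume ne: "m (S.iv a) a \<noteq> m b (S.iv b)"
    show "n (g0 a) (g0 b) = w" using P eps_orth[OF I(1) I(2) ne] M by simp
  next
    assume eq: "m (S.iv a) a = m b (S.iv b)"
    have ee: "n (eps (m b (S.iv b))) (eps (m b (S.iv b))) = eps (m b (S.iv b))"
      using eps_idem[OF I(2)] T.idem_sq by blast
    have "n (g0 a) (g0 b) = n (\<alpha> a) (n (eps (m b (S.iv b))) (\<alpha> b))" using P eq ee by simp
    also have "\<dots> = n (\<alpha> a) (g0 b)" using g0_alt[OF b] by simp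
    also have "\<dots> = n (\<alpha> (m a b)) (eps (m (S.iv b) b))" unfolding g0_def using a b M by (simp add: al_mult)
    also have "m (S.iv b) b = m (S.iv (m a b)) (m a b)"
      using S.dd_prod[OF a b eq] by simp
    finally show "n (g0 a) (g0 b) = g0 (m a b)" unfolding g0_def .
  }
qed

lemma g0_compat: assumes A: "A \<in> KG S m" shows "T.pc (g0 ` A)"
  unfolding T.pc_def
proof (intro ballI)
  fix x y assume "x \<in> g0 ` A" "y \<in> g0 ` A"
  then obtain a b where ab: "a \<in> A" "b \<in> A" "x = g0 a" "y = g0 b" by auto
  have S: "a \<in> S" "b \<in> S" using ab A S.KG_M by auto
  show "compatible T n x y"
  proof (cases "a = b")
    case True
    then show ?thesis using ab g0_M S T.compatible_self by simp
  next
    case False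
    have dne: "m (S.iv a) a \<noteq> m (S.iv b) b" using False S.KG_inj_dd[OF A ab(1) ab(2)] by auto
    have rne: "m a (S.iv a) \<noteq> m b (S.iv b)" using False S.KG_inj_rr[OF A ab(1) ab(2)] by auto
    have I: "S.idem (m (S.iv a) a)" "S.idem (m (S.iv b) b)" "S.idem (m a (S.iv a))" "S.idem (m b (S.iv b))"
      using S by auto
    have M: "eps (m (S.iv a) a) \<in> T" "eps (m (S.iv b) b) \<in> T" "eps (m a (S.iv a)) \<in> T" "eps (m b (S.iv b)) \<in> T"
      "\<alpha> a \<in> T" "\<alpha> b \<in> T"
      using I eps_M S by auto
    have 1: "n (T.iv x) y = w"
    proof -
      have "n (T.iv x) y = n (T.iv (\<alpha> a)) (n (n (eps (m a (S.iv a))) (eps (m b (S.iv b)))) (\<alpha> b))"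
        unfolding ab g0_alt[OF S(1)] g0_alt[OF S(2)] using M eps_idem I
        by (simp add: T.inv_mult T.idem_inv)
      then show ?thesis using eps_orth[OF I(3) I(4) rne] M by simp
    qed
    have 2: "n x (T.iv y) = w"
    proof -
      have "n x (T.iv y) = n (\<alpha> a) (n (n (eps (m (S.iv a) a)) (eps (m (S.iv b) b))) (T.iv (\<alpha> b)))"
        unfolding ab g0_def using M eps_idem I
        by (simp add: T.inv_mult T.idem_inv)
      then show ?thesis using eps_orth[OF I(1) I(2) dne] M by simp
    qed
    show ?thesis using T.compatible_zero[OF 1 2] .
  qed
qed

lemma Gam_join: assumes A: "A \<in> KG S m" shows "is_join T n (g0 ` A) (Gam A)"
proof -
  have AS: "A \<subseteq> S" using A S.KG_iff by auto
  then have "finite A" using finS finite_subset by blast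
  then show ?thesis unfolding Gam_def
    by (intro T.join_exI) (use AS g0_M g0_compat[OF A] in auto)
qed

lemma Gam_M: "A \<in> KG S m \<Longrightarrow> Gam A \<in> T"
  using Gam_join T.join_M by blast

lemma Gam_down: assumes a: "a \<in> S" shows "Gam (down S m a) = \<alpha> a"
proof -
  let ?e = "m (S.iv a) a"
  have ei: "S.idem ?e" using a by simp
  have seteq: "g0 ` down S m a = (\<lambda>y. n (\<alpha> a) y) ` (eps ` Le ?e)"
  proof (intro set_eqI iffI)
    fix z assume "z \<in> g0 ` down S m a"
    then obtain x where x: "x \<in> S" "nleq S m x a" "z = g0 x" unfolding down_def by auto
    have xe: "x = m a (m (S.iv x) x)" using x unfolding nleq_def by simp
    have di: "S.idem (m (S.iv x) x)" using x by simp
    have "g0 x = n (\<alpha> a) (n (\<alpha> (m (S.iv x) x)) (eps (m (S.iv x) x)))"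
    proof -
      have "\<alpha> x = n (\<alpha> a) (\<alpha> (m (S.iv x) x))" using xe a x al_mult[of a "m (S.iv x) x"] by simp
      then show ?thesis unfolding g0_def using a x eps_M[OF di] by simp
    qed
    also have "\<dots> = n (\<alpha> a) (eps (m (S.iv x) x))" using eps_le[OF di] by simp
    finally have "z = n (\<alpha> a) (eps (m (S.iv x) x))" using x by simp
    moreover have "m (S.iv x) x \<in> Le ?e" unfolding Le_def using S.le_dom[OF x(2) x(1) a] di by simp
    ultimately show "z \<in> (\<lambda>y. n (\<alpha> a) y) ` (eps ` Le ?e)" by blast
  next
    fix z assume "z \<in> (\<lambda>y. n (\<alpha> a) y) ` (eps ` Le ?e)"
    then obtain f where f: "S.idem f" "nleq S m f ?e" "z = n (\<alpha> a) (eps f)" unfolding Le_def by auto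
    have fS: "f \<in> S" using f S.idem_M by auto
    have ff: "m ?e f = f" using S.le_idem_iff[OF f(1) ei] f(2) by simp
    define x where "x = m a f"
    have xS: "x \<in> S" using x_def a fS by simp
    have xle: "nleq S m x a" using S.le_right[OF xS a] f(1) x_def by blast
    have dx: "m (S.iv x) x = f"
    proof -
      have "m (S.iv x) x = m f (m ?e f)" unfolding x_def using a fS f(1) by (simp add: S.inv_mult S.idem_inv)
      also have "\<dots> = f" using ff f(1) S.idem_sq by simp
      finally show ?thesis .
    qed
    have "g0 x = n (\<alpha> x) (eps f)" unfolding g0_def dx by simp
    also have "\<dots> = n (\<alpha> a) (n (\<alpha> f) (eps f))" unfolding x_def using a fS eps_M[OF f(1)] by (simp add: al_mult)
    also have "\<dots> = z" using eps_le[OF f(1)] f(3) by simp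
    finally show "z \<in> g0 ` down S m a" using xS xle unfolding down_def by blast
  qed
  have J: "is_join T n ((\<lambda>y. n (\<alpha> a) y) ` (eps ` Le ?e)) (n (\<alpha> a) (\<alpha> ?e))"
    by (rule T.distrib(1)[OF _ _ _ eps_sum[OF ei]])
       (use finite_Le a eps_M eps_idem T.pc_idem[of "eps ` Le ?e"] in \<open>auto simp: Le_def\<close>)
  have "n (\<alpha> a) (\<alpha> ?e) = \<alpha> a" using a by (simp add: al_mult[symmetric])
  then have "is_join T n (g0 ` down S m a) (\<alpha> a)" using J seteq by simp
  then show ?thesis using Gam_join[OF S.KG_down[OF a]] T.join_unique by blast
qed

lemma Gam_unit: "Gam (idems S m) = v"
proof -
  have K: "idems S m \<in> KG S m" using S.KG_idems S.idems_eq by auto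
  have "g0 ` idems S m = eps ` Le u"
  proof -
    have "idems S m = Le u" unfolding Le_def S.idems_eq using S.idem_le_one by auto
    moreover have "g0 e = eps e" if "S.idem e" for e
      using that eps_le[OF that] S.idem_dd[OF that] unfolding g0_def by simp
    ultimately show ?thesis unfolding Le_def by auto
  qed
  then have "is_join T n (g0 ` idems S m) v" using eps_sum[of u] al_u by simp
  then show ?thesis using Gam_join[OF K] T.join_unique by blast
qed

lemma Gam_empty: "Gam {} = w"
  using Gam_join[OF S.KG_empty] T.join_empty T.join_unique by simp

lemma Gam_union: assumes A: "A \<in> KG S m" and B: "B \<in> KG S m" and U: "A \<union> B \<in> KG S m"
  shows "is_join T n {Gam A, Gam B} (Gam (A \<union> B))"
proof -
  have "is_join T n (g0 ` A \<union> g0 ` B) (Gam (A \<union> B))" using Gam_join[OF U] by (simp add: image_Un)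
  then show ?thesis
    by (rule T.join_union_rev[OF Gam_join[OF A] Gam_join[OF B]])
       (use A B S.KG_M g0_M in auto)
qed

lemma Gam_mult: assumes A: "A \<in> KG S m" and B: "B \<in> KG S m"
  shows "Gam (gprod S m A B) = n (Gam A) (Gam B)"
proof -
  have AS: "A \<subseteq> S" "B \<subseteq> S" using A B S.KG_iff by auto
  have fin: "finite A" "finite B" using AS finS finite_subset by auto
  have gT: "g0 ` A \<subseteq> T" "g0 ` B \<subseteq> T" using AS g0_M by auto
  have JB: "is_join T n ((\<lambda>y. n (Gam A) y) ` (g0 ` B)) (n (Gam A) (Gam B))"
    by (rule T.distrib(1)[OF _ gT(2) g0_compat[OF B] Gam_join[OF B] Gam_M[OF A]]) (use fin in auto)
  have JA: "is_join T n ((\<lambda>y. n y (g0 b)) ` (g0 ` A)) (n (Gam A) (g0 b))" if "b \<in> B" for b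
    by (rule T.distrib(2)[OF _ gT(1) g0_compat[OF A] Gam_join[OF A]]) (use fin that AS g0_M in auto)
  have U: "is_join T n (\<Union>b\<in>B. (\<lambda>y. n y (g0 b)) ` (g0 ` A)) (n (Gam A) (Gam B))"
  proof (rule T.join_family[where j = "\<lambda>b. n (Gam A) (g0 b)"])
    show "\<And>i. i \<in> B \<Longrightarrow> is_join T n ((\<lambda>y. n y (g0 i)) ` g0 ` A) (n (Gam A) (g0 i))" using JA by blast
    show "is_join T n ((\<lambda>b. n (Gam A) (g0 b)) ` B) (n (Gam A) (Gam B))" using JB by (simp add: image_image)
    show "\<And>i x. i \<in> B \<Longrightarrow> x \<in> (\<lambda>y. n y (g0 i)) ` g0 ` A \<Longrightarrow> x \<in> T" using AS by (auto intro!: T.closed g0_M)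
  qed
  have seteq: "insert w (\<Union>b\<in>B. (\<lambda>y. n y (g0 b)) ` (g0 ` A)) = insert w (g0 ` gprod S m A B)"
  proof (intro set_eqI iffI)
    fix z assume "z \<in> insert w (\<Union>b\<in>B. (\<lambda>y. n y (g0 b)) ` (g0 ` A))"
    then consider "z = w" | a b where "a \<in> A" "b \<in> B" "z = n (g0 a) (g0 b)" by auto
    then show "z \<in> insert w (g0 ` gprod S m A B)"
    proof cases
      case 1 then show ?thesis by simp
    next
      case (2 a b)
      have S: "a \<in> S" "b \<in> S" using 2 AS by auto
      show ?thesis
      proof (cases "m (S.iv a) a = m b (S.iv b)")
        case True
        then have "z = g0 (m a b)" using g0_mult(1)[OF S True] 2 by simp
        moreover have "m a b \<in> gprod S m A B" unfolding S.gprod_mem using 2 True by blast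
        ultimately show ?thesis by blast
      next
        case False
        then show ?thesis using g0_mult(2)[OF S False] 2 by simp
      qed
    qed
  next
    fix z assume "z \<in> insert w (g0 ` gprod S m A B)"
    then consider "z = w" | a b where "a \<in> A" "b \<in> B" "m (S.iv a) a = m b (S.iv b)" "z = g0 (m a b)"
      by (auto simp: S.gprod_mem)
    then show "z \<in> insert w (\<Union>b\<in>B. (\<lambda>y. n y (g0 b)) ` (g0 ` A))"
    proof cases
      case 1 then show ?thesis by simp
    next
      case (2 a b)
      have S: "a \<in> S" "b \<in> S" using 2 AS by auto
      have "z = n (g0 a) (g0 b)" using g0_mult(1)[OF S 2(3)] 2(4) by simp
      then show ?thesis using 2 by blast
    qed
  qed
  have "is_join T n (insert w (g0 ` gprod S m A B)) (n (Gam A) (Gam B))"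
    using T.join_insert_zero[OF U] seteq by simp
  moreover have "is_join T n (insert w (g0 ` gprod S m A B)) (Gam (gprod S m A B))"
    using T.join_insert_zero[OF Gam_join[OF S.KG_prod[OF A B]]] .
  ultimately show ?thesis using T.join_unique by blast
qed

end



context ctx begin

definition good where "good \<gamma> \<longleftrightarrow> \<gamma> \<in> KG S m \<rightarrow>\<^sub>E T
           \<and> bim_morphism (KG S m) (gprod S m) (idems S m) {} T n v w \<gamma>
           \<and> (\<forall>a\<in>S. \<gamma> (down S m a) = \<alpha> a)"

lemma KG_idemsS: "idems S m \<in> KG S m" using S.KG_idems S.idems_eq by auto

lemma Gam_good: "good (restrict Gam (KG S m))"
  unfolding good_def
proof (intro conjI ballI)
  show "restrict Gam (KG S m) \<in> KG S m \<rightarrow>\<^sub>E T" using Gam_M by auto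
  show "restrict Gam (KG S m) (down S m a) = \<alpha> a" if "a \<in> S" for a
    using Gam_down[OF that] S.KG_down[OF that] by simp
  show "bim_morphism (KG S m) (gprod S m) (idems S m) {} T n v w (restrict Gam (KG S m))"
    unfolding bim_morphism_def monoid_hom_def
  proof (intro conjI ballI allI impI)
    show "restrict Gam (KG S m) \<in> KG S m \<rightarrow> T" using Gam_M by auto
    fix x y assume xy: "x \<in> KG S m" "y \<in> KG S m"
    then show "restrict Gam (KG S m) (gprod S m x y) = n (restrict Gam (KG S m) x) (restrict Gam (KG S m) y)"
      using Gam_mult S.KG_prod by simp
  next
    show "restrict Gam (KG S m) (idems S m) = v" using KG_idemsS Gam_unit by simp
    show "restrict Gam (KG S m) {} = w" using S.KG_empty Gam_empty by simp
  next
    fix a b j assume ab: "a \<in> KG S m" "b \<in> KG S m"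
      and c: "compatible (KG S m) (gprod S m) a b \<and> is_join (KG S m) (gprod S m) {a, b} j"
    have U: "a \<union> b \<in> KG S m" using S.union_KG_compat[OF ab] c by simp
    have j: "j = a \<union> b" using S.join_KG_eq[OF ab U] c by simp
    show "is_join T n {restrict Gam (KG S m) a, restrict Gam (KG S m) b} (restrict Gam (KG S m) j)"
      using Gam_union[OF ab U] ab U j by simp
  qed
qed

context
  fixes \<gamma> assumes g: "good \<gamma>"
begin

lemma gd_M: "A \<in> KG S m \<Longrightarrow> \<gamma> A \<in> T"
  using g unfolding good_def by auto

lemma gd_mult: "A \<in> KG S m \<Longrightarrow> B \<in> KG S m \<Longrightarrow> \<gamma> (gprod S m A B) = n (\<gamma> A) (\<gamma> B)"
  using g unfolding good_def bim_morphism_def monoid_hom_def by auto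

lemma gd_empty: "\<gamma> {} = w"
  using g unfolding good_def bim_morphism_def by auto

lemma gd_down: "a \<in> S \<Longrightarrow> \<gamma> (down S m a) = \<alpha> a"
  using g unfolding good_def by auto

lemma gd_join: assumes A: "A \<in> KG S m" and B: "B \<in> KG S m" and U: "A \<union> B \<in> KG S m"
  shows "is_join T n {\<gamma> A, \<gamma> B} (\<gamma> (A \<union> B))"
proof -
  have c: "compatible (KG S m) (gprod S m) A B" using S.union_KG_compat[OF A B] U by simp
  have j: "is_join (KG S m) (gprod S m) {A, B} (A \<union> B)" using S.join_KG[OF A B U] .
  have "\<forall>a\<in>KG S m. \<forall>b\<in>KG S m. \<forall>j. compatible (KG S m) (gprod S m) a b \<and> is_join (KG S m) (gprod S m) {a, b} j
          \<longrightarrow> is_join T n {\<gamma> a, \<gamma> b} (\<gamma> j)"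
    using g unfolding good_def bim_morphism_def by blast
  then show ?thesis using A B c j by blast
qed

lemma gd_sing: assumes A: "A \<in> KG S m" shows "is_join T n ((\<lambda>x. \<gamma> {x}) ` A) (\<gamma> A)"
proof -
  have "finite A" using A S.KG_iff finS finite_subset by blast
  then show ?thesis using A
  proof (induct A rule: finite_induct)
    case empty
    then show ?case using gd_empty T.join_empty by simp
  next
    case (insert x F)
    have F: "F \<in> KG S m" using insert.prems S.KG_sub by blast
    have X: "{x} \<in> KG S m" using insert.prems S.KG_sub by blast
    have IH: "is_join T n ((\<lambda>x. \<gamma> {x}) ` F) (\<gamma> F)" using insert.hyps F by blast
    have P: "is_join T n {\<gamma> {x}, \<gamma> F} (\<gamma> (insert x F))"
      using gd_join[OF X F] insert.prems by simp
    have "is_join T n ({\<gamma> {x}} \<union> (\<lambda>x. \<gamma> {x}) ` F) (\<gamma> (insert x F))"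
      by (rule T.join_union[OF T.join_single IH P]) (use gd_M X F S.KG_sub in auto)
    then show ?case by simp
  qed
qed

lemma down_dd: assumes x: "x \<in> S" shows "gprod S m (down S m x) {m (S.iv x) x} = {x}"
proof (intro set_eqI iffI)
  fix z assume "z \<in> gprod S m (down S m x) {m (S.iv x) x}"
  then obtain y where y: "z = m y (m (S.iv x) x)" "y \<in> S" "nleq S m y x"
      "m (S.iv y) y = m (m (S.iv x) x) (S.iv (m (S.iv x) x))"
    unfolding S.gprod_mem down_def by auto
  have "m (m (S.iv x) x) (S.iv (m (S.iv x) x)) = m (S.iv x) x" using S.idem_rr[of "m (S.iv x) x"] x by simp
  then have dy: "m (S.iv y) y = m (S.iv x) x" using y by simp
  have "y = m x (m (S.iv y) y)" using y unfolding nleq_def by simp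
  then have yx: "y = m x (m (S.iv x) x)" using dy by simp
  then have "y = x" using x by simp
  then show "z \<in> {x}" using y x by simp
next
  fix z assume "z \<in> {x}"
  then have z: "z = x" by simp
  have "m (S.iv x) x = m (m (S.iv x) x) (S.iv (m (S.iv x) x))" using S.idem_rr[of "m (S.iv x) x"] x by simp
  moreover have "x = m x (m (S.iv x) x)" using x by simp
  moreover have "x \<in> down S m x" using x unfolding down_def by simp
  ultimately show "z \<in> gprod S m (down S m x) {m (S.iv x) x}" unfolding S.gprod_mem z by blast
qed

lemma gd_single: assumes x: "x \<in> S" shows "\<gamma> {x} = n (\<alpha> x) (\<gamma> {m (S.iv x) x})"
proof -
  have "\<gamma> {x} = \<gamma> (gprod S m (down S m x) {m (S.iv x) x})" using down_dd[OF x] by simp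
  also have "\<dots> = n (\<gamma> (down S m x)) (\<gamma> {m (S.iv x) x})"
    using gd_mult S.KG_down[OF x] S.KG_single x by simp
  finally show ?thesis using gd_down x by simp
qed

lemma gd_idem: assumes "X \<subseteq> {e. S.idem e}" shows "T.idem (\<gamma> X)"
proof -
  have K: "X \<in> KG S m" using S.KG_idems assms by blast
  have "\<gamma> X = \<gamma> (gprod S m X X)" using S.gprod_idems[OF assms assms] by simp
  also have "\<dots> = n (\<gamma> X) (\<gamma> X)" using gd_mult K by simp
  finally show ?thesis using gd_M K unfolding T.idem_def by simp
qed

lemma down_idem: assumes e: "S.idem e" shows "down S m e = insert e (Lt e)"
  unfolding down_def Lt_def using S.le_idem_idem e S.idem_M by auto

lemma gd_idem_facts: assumes e: "S.idem e"
  shows "is_join T n {\<gamma> {e}, \<gamma> (Lt e)} (\<alpha> e)" "n (\<gamma> {e}) (\<gamma> (Lt e)) = w"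
    "T.idem (\<gamma> {e})" "T.idem (\<gamma> (Lt e))"
proof -
  have sub: "Lt e \<subseteq> {e. S.idem e}" "{e} \<subseteq> {e. S.idem e}" using e unfolding Lt_def by auto
  have K: "Lt e \<in> KG S m" "{e} \<in> KG S m" "{e} \<union> Lt e \<in> KG S m"
    using S.KG_idems sub by auto
  have "is_join T n {\<gamma> {e}, \<gamma> (Lt e)} (\<gamma> ({e} \<union> Lt e))" using gd_join[OF K(2) K(1) K(3)] .
  moreover have "{e} \<union> Lt e = down S m e" using down_idem[OF e] by simp
  ultimately show "is_join T n {\<gamma> {e}, \<gamma> (Lt e)} (\<alpha> e)" using gd_down e S.idem_M by simp
  have "gprod S m {e} (Lt e) = {}" using S.gprod_idems[OF sub(2) sub(1)] unfolding Lt_def by auto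
  then show "n (\<gamma> {e}) (\<gamma> (Lt e)) = w" using gd_mult[OF K(2) K(1)] gd_empty by simp
  show "T.idem (\<gamma> {e})" "T.idem (\<gamma> (Lt e))" using gd_idem sub by auto
qed

end

lemma good_unique_idem: assumes g1: "good \<gamma>1" and g2: "good \<gamma>2" and e: "S.idem e"
  shows "\<gamma>1 {e} = \<gamma>2 {e}"
  using e
proof (induct e rule: idem_induct)
  case (step e)
  have "Lt e \<subseteq> {e. S.idem e}" unfolding Lt_def by auto
  then have K: "Lt e \<in> KG S m" using S.KG_idems by blast
  have "(\<lambda>x. \<gamma>1 {x}) ` Lt e = (\<lambda>x. \<gamma>2 {x}) ` Lt e" using step(2) by (intro image_cong) auto
  then have q: "\<gamma>1 (Lt e) = \<gamma>2 (Lt e)"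
    using gd_sing[OF g1 K] gd_sing[OF g2 K] T.join_unique by metis
  note f1 = gd_idem_facts[OF g1 step(1)] and f2 = gd_idem_facts[OF g2 step(1)]
  show ?case
    by (rule T.rel_compl_unique[OF f1(3) f2(3) f1(4) f1(2) _ f1(1)]) (use f2 q in auto)
qed

lemma good_unique: assumes g1: "good \<gamma>1" and g2: "good \<gamma>2" shows "\<gamma>1 = \<gamma>2"
proof (rule extensionalityI)
  show "\<gamma>1 \<in> extensional (KG S m)" "\<gamma>2 \<in> extensional (KG S m)"
    using g1 g2 unfolding good_def PiE_def by auto
  fix A assume A: "A \<in> KG S m"
  have "\<gamma>1 {x} = \<gamma>2 {x}" if "x \<in> A" for x
  proof -
    have x: "x \<in> S" using that A S.KG_M by auto
    have "\<gamma>1 {m (S.iv x) x} = \<gamma>2 {m (S.iv x) x}" using good_unique_idem[OF g1 g2] x by simp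
    then show ?thesis using gd_single[OF g1 x] gd_single[OF g2 x] by simp
  qed
  then have "(\<lambda>x. \<gamma>1 {x}) ` A = (\<lambda>x. \<gamma>2 {x}) ` A" by (intro image_cong) auto
  then show "\<gamma>1 A = \<gamma>2 A" using gd_sing[OF g1 A] gd_sing[OF g2 A] T.join_unique by metis
qed

lemma main: "\<exists>!\<gamma>. good \<gamma>"
  using Gam_good good_unique by blast

end

theorem mainTheorem3:
  fixes S :: "'a set" and m :: "'a \<Rightarrow> 'a \<Rightarrow> 'a" and u :: 'a
    and T :: "'b set" and n :: "'b \<Rightarrow> 'b \<Rightarrow> 'b" and v :: 'b and w :: 'b
    and \<alpha> :: "'a \<Rightarrow> 'b"
  assumes "finite S"
    and "inverse_monoid S m u"
    and "boolean_inverse_monoid T n v w"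
    and "monoid_hom S m u T n v \<alpha>"
  shows "\<exists>!\<gamma>. \<gamma> \<in> KG S m \<rightarrow>\<^sub>E T
           \<and> bim_morphism (KG S m) (gprod S m) (idems S m) {} T n v w \<gamma>
           \<and> (\<forall>a\<in>S. \<gamma> (down S m a) = \<alpha> a)"
proof -
  have iT: "inverse_monoid T n v" using assms(3) unfolding boolean_inverse_monoid_def by (elim conjE)
  interpret ctx S m u T n v w \<alpha>
  proof (unfold_locales)
    show "inverse_monoid S m u" by (rule assms(2))
    show "inverse_monoid T n v" by (rule iT)
    show "boolean_inverse_monoid T n v w" by (rule assms(3))
    show "finite S" by (rule assms(1))
    show "monoid_hom S m u T n v \<alpha>" by (rule assms(4))
  qed
  show ?thesis using main unfolding good_def .
qed

end
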